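(* Let $\mathcal{G}$ and $\mathcal{F}$ be quantum isomorphic quantum graphs. Then for every $r\geq1$ the quantum graphs $\mu_{r-1}(\mathcal{G})$ and $\mu_{r-1}(\mathcal{F})$ are quantum isomorphic.
   Context: Quantum graph $\mathcal{G}=(C(\mathcal{G}),\psi_{\mathcal{G}},A_{\mathcal{G}})$: $C(\mathcal{G})$ finite-dimensional C*-algebra, $\psi_{\mathcal{G}}$ a faithful state with $mm^*=\delta_{\mathcal{G}}^2\mathrm{id}$ on the GNS space $L^2(\mathcal{G})$ ($m$ the multiplication, $\delta_{\mathcal{G}}>0$), $A_{\mathcal{G}}$ self-adjoint on $L^2(\mathcal{G})$ with $m(A\otimes A)m^*=A$ and $A=(\mathrm{id}\otimes\eta^*m)(\mathrm{id}\otimes A\otimes\mathrm{id})(m^*\eta\otimes\mathrm{id})$, $\eta$ the unit map. Quantum isomorphism: choosing orthonormal bases $\{e_j\}$ of $L^2(\mathcal{G})$, $\{f_i\}$ of $L^2(\mathcal{F})$, $\mathcal{G}$ and $\mathcal{F}$ are quantum isomorphic iff the universal $*$-algebra generated by entries $p_{ij}$ of a unitary matrix subject to relations making $e_j\mapsto\sum_i f_i\otimes p_{ij}$ a unital $*$-homomorphism $C(\mathcal{G})\to C(\mathcal{F})\otimes(\cdot)$ with $\rho A_{\mathcal{G}}=(A_{\mathcal{F}}\otimes\mathrm{id})\rho$ is non-zero. Quantum Mycielskian of order $r-1$ ($r\ge2$): $C(\mu_{r-1}(\mathcal{G}))=\mathbb{C}\oplus\bigoplus_{k=1}^rC(\mathcal{G})$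 with state $\psi(\lambda,x_1,\dots,x_r)=\frac{1}{1+r\delta_{\mathcal{G}}^2}\bigl(\lambda+\delta_{\mathcal{G}}^2\sum_k\psi_{\mathcal{G}}(x_k)\bigr)$ and adjacency operator $A(\lambda,x_1,\dots,x_r)=(y_0,y_1,\dots,y_r)$ where $y_0=\delta_{\mathcal{G}}^2\psi_{\mathcal{G}}(x_r)$, $y_1=A_{\mathcal{G}}(x_1+x_2)$, $y_k=A_{\mathcal{G}}(x_{k-1}+x_{k+1})$ for $2\le k\le r-1$, $y_r=\lambda\mathbf{1}+A_{\mathcal{G}}x_{r-1}$ (for $r=2$: $y_1=A_{\mathcal{G}}(x_1+x_2)$, $y_2=\lambda\mathbf 1+A_{\mathcal{G}}x_1$). For $r=1$, $\mu_0(\mathcal{G})=\mathcal{G}$. *)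

theory Defs
  imports Complex_Main
begin

text \<open>A quantum graph G = (C(G), psi, A) is presented through an orthonormal basis
  e_0, ..., e_(N-1) of its GNS space L^2(G) (inner product given by psi(x^* y)).
  Elements of C(G) = L^2(G) are coordinate vectors (nat => complex), zero at indices >= N.
  Data: e_i e_j = sum_k qmul i j k e_k;  e_i^* = sum_k qstar i k e_k (the involution is
  conjugate linear);  1 = sum_k qunit k e_k;  qstate k = psi(e_k);  A e_j = sum_i qadj i j e_i;
  qdelta is the constant delta with m m^* = delta^2 id.\<close>

record qgraph =
  qdim   :: nat
  qmul   :: "nat \<Rightarrow> nat \<Rightarrow> nat \<Rightarrow> complex"
  qstar  :: "nat \<Rightarrow> nat \<Rightarrow> complex"
  qunit  :: "nat \<Rightarrow> complex"
  qstate :: "nat \<Rightarrow> complex"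
  qdelta :: real
  qadj   :: "nat \<Rightarrow> nat \<Rightarrow> complex"

definition vecs :: "nat \<Rightarrow> (nat \<Rightarrow> complex) set" where
  "vecs N = {x. \<forall>k\<ge>N. x k = 0}"

definition vadd :: "nat \<Rightarrow> (nat \<Rightarrow> complex) \<Rightarrow> (nat \<Rightarrow> complex) \<Rightarrow> (nat \<Rightarrow> complex)" where
  "vadd N x y = (\<lambda>k. if k < N then x k + y k else 0)"

definition vscale :: "nat \<Rightarrow> complex \<Rightarrow> (nat \<Rightarrow> complex) \<Rightarrow> (nat \<Rightarrow> complex)" where
  "vscale N c x = (\<lambda>k. if k < N then c * x k else 0)"

definition vmul :: "qgraph \<Rightarrow> (nat \<Rightarrow> complex) \<Rightarrow> (nat \<Rightarrow> complex) \<Rightarrow> (nat \<Rightarrow> complex)" where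
  "vmul G x y = (\<lambda>k. if k < qdim G then
      (\<Sum>i<qdim G. \<Sum>j<qdim G. x i * y j * qmul G i j k) else 0)"

definition vstar :: "qgraph \<Rightarrow> (nat \<Rightarrow> complex) \<Rightarrow> (nat \<Rightarrow> complex)" where
  "vstar G x = (\<lambda>k. if k < qdim G then (\<Sum>i<qdim G. cnj (x i) * qstar G i k) else 0)"

definition vone :: "qgraph \<Rightarrow> (nat \<Rightarrow> complex)" where
  "vone G = (\<lambda>k. if k < qdim G then qunit G k else 0)"

definition vpsi :: "qgraph \<Rightarrow> (nat \<Rightarrow> complex) \<Rightarrow> complex" where
  "vpsi G x = (\<Sum>k<qdim G. x k * qstate G k)"

definition vinner :: "nat \<Rightarrow> (nat \<Rightarrow> complex) \<Rightarrow> (nat \<Rightarrow> complex) \<Rightarrow> complex" where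
  "vinner N x y = (\<Sum>k<N. cnj (x k) * y k)"

definition is_fd_cstar_algebra :: "qgraph \<Rightarrow> bool" where
  "is_fd_cstar_algebra G \<longleftrightarrow>
     (let N = qdim G; V = vecs N in
      vone G \<in> V \<and>
      (\<forall>x\<in>V. \<forall>y\<in>V. \<forall>z\<in>V. vmul G (vmul G x y) z = vmul G x (vmul G y z)) \<and>
      (\<forall>x\<in>V. vmul G (vone G) x = x \<and> vmul G x (vone G) = x) \<and>
      (\<forall>x\<in>V. vstar G (vstar G x) = x) \<and>
      (\<forall>x\<in>V. \<forall>y\<in>V. vstar G (vmul G x y) = vmul G (vstar G y) (vstar G x)) \<and>
      (\<exists>nrm :: (nat \<Rightarrow> complex) \<Rightarrow> real.
         (\<forall>x\<in>V. nrm x \<ge> 0 \<and> (nrm x = 0 \<longleftrightarrow> x = (\<lambda>_. 0))) \<and>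
         (\<forall>x\<in>V. \<forall>c. nrm (vscale N c x) = cmod c * nrm x) \<and>
         (\<forall>x\<in>V. \<forall>y\<in>V. nrm (vadd N x y) \<le> nrm x + nrm y) \<and>
         (\<forall>x\<in>V. \<forall>y\<in>V. nrm (vmul G x y) \<le> nrm x * nrm y) \<and>
         (\<forall>x\<in>V. nrm (vmul G (vstar G x) x) = (nrm x)\<^sup>2)))"

text \<open>psi is a state on C(G) whose GNS inner product psi(x^* y) is the standard inner
  product of the coordinates, i.e. the chosen basis is orthonormal in L^2(G)
  (this also makes psi positive and faithful).\<close>
definition is_gns_state :: "qgraph \<Rightarrow> bool" where
  "is_gns_state G \<longleftrightarrow>
     vpsi G (vone G) = 1 \<and>
     (\<forall>x\<in>vecs (qdim G). \<forall>y\<in>vecs (qdim G).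
        vpsi G (vmul G (vstar G x) y) = vinner (qdim G) x y)"

text \<open>m m^* = delta^2 id, written in the orthonormal basis:
  m m^* e_k = sum_{i,j} cnj(c_{ijk}) sum_l c_{ijl} e_l.\<close>
definition is_delta_form :: "qgraph \<Rightarrow> bool" where
  "is_delta_form G \<longleftrightarrow> qdelta G > 0 \<and>
     (\<forall>k<qdim G. \<forall>l<qdim G.
        (\<Sum>i<qdim G. \<Sum>j<qdim G. qmul G i j l * cnj (qmul G i j k))
          = complex_of_real ((qdelta G)\<^sup>2) * (if k = l then 1 else 0))"

text \<open>Adjacency operator axioms, in the orthonormal basis:
  A self-adjoint;  m (A \<otimes> A) m^* = A;
  A = (id \<otimes> eta^* m)(id \<otimes> A \<otimes> id)(m^* eta \<otimes> id).\<close>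
definition is_qadjacency :: "qgraph \<Rightarrow> bool" where
  "is_qadjacency G \<longleftrightarrow> (let N = qdim G; c = qmul G; a = qadj G; u = qunit G in
     (\<forall>i<N. \<forall>j<N. a i j = cnj (a j i)) \<and>
     (\<forall>k<N. \<forall>l<N.
        (\<Sum>i<N. \<Sum>j<N. \<Sum>p<N. \<Sum>q<N. cnj (c i j k) * a p i * a q j * c p q l) = a l k) \<and>
     (\<forall>i<N. \<forall>t<N.
        (\<Sum>k<N. \<Sum>j<N. \<Sum>q<N. \<Sum>l<N. u k * cnj (c i j k) * a q j * c q t l * cnj (u l))
          = a i t))"

definition is_qgraph :: "qgraph \<Rightarrow> bool" where
  "is_qgraph G \<longleftrightarrow> is_fd_cstar_algebra G \<and> is_gns_state G \<and> is_delta_form G \<and> is_qadjacency G"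

text \<open>Generators (i, j, False) = p_ij and (i, j, True) = p_ij^*.  Elements of the free
  *-algebra are (finitely supported) coefficient functions on words.\<close>
type_synonym gen = "nat \<times> nat \<times> bool"
type_synonym fa = "gen list \<Rightarrow> complex"

definition fa_zero :: fa where "fa_zero = (\<lambda>_. 0)"
definition fa_one :: fa where "fa_one = (\<lambda>w. if w = [] then 1 else 0)"
definition fa_gen :: "gen \<Rightarrow> fa" where "fa_gen g = (\<lambda>w. if w = [g] then 1 else 0)"
definition fa_add :: "fa \<Rightarrow> fa \<Rightarrow> fa" where "fa_add f g = (\<lambda>w. f w + g w)"
definition fa_sub :: "fa \<Rightarrow> fa \<Rightarrow> fa" where "fa_sub f g = (\<lambda>w. f w - g w)"
definition fa_smul :: "complex \<Rightarrow> fa \<Rightarrow> fa" where "fa_smul c f = (\<lambda>w. c * f w)"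
definition fa_sum :: "('i \<Rightarrow> fa) \<Rightarrow> 'i set \<Rightarrow> fa" where
  "fa_sum F A = (\<lambda>w. \<Sum>a\<in>A. F a w)"
definition fa_mul :: "fa \<Rightarrow> fa \<Rightarrow> fa" where
  "fa_mul f g = (\<lambda>w. \<Sum>k\<le>length w. f (take k w) * g (drop k w))"
definition gen_flip :: "gen \<Rightarrow> gen" where "gen_flip g = (case g of (i, j, b) \<Rightarrow> (i, j, \<not> b))"
definition fa_star :: "fa \<Rightarrow> fa" where
  "fa_star f = (\<lambda>w. cnj (f (rev (map gen_flip w))))"
definition fa_finite :: "fa \<Rightarrow> bool" where "fa_finite f \<longleftrightarrow> finite {w. f w \<noteq> 0}"

abbreviation fa_p :: "nat \<Rightarrow> nat \<Rightarrow> fa" where "fa_p i j \<equiv> fa_gen (i, j, False)"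
abbreviation fa_pstar :: "nat \<Rightarrow> nat \<Rightarrow> fa" where "fa_pstar i j \<equiv> fa_gen (i, j, True)"

inductive_set star_ideal :: "fa set \<Rightarrow> fa set" for R where
  rel: "r \<in> R \<Longrightarrow> r \<in> star_ideal R"
| rel_star: "r \<in> R \<Longrightarrow> fa_star r \<in> star_ideal R"
| zero: "fa_zero \<in> star_ideal R"
| add: "x \<in> star_ideal R \<Longrightarrow> y \<in> star_ideal R \<Longrightarrow> fa_add x y \<in> star_ideal R"
| mult: "x \<in> star_ideal R \<Longrightarrow> fa_finite a \<Longrightarrow> fa_finite b \<Longrightarrow>
           fa_mul (fa_mul a x) b \<in> star_ideal R"

definition kdelta :: "nat \<Rightarrow> nat \<Rightarrow> complex" where
  "kdelta i j = (if i = j then 1 else 0)"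

text \<open>Relations (written as lhs - rhs) on p_ij (i < dim F, j < dim G) saying that
  P = (p_ij) is unitary, that rho(e_j) = sum_i f_i \<otimes> p_ij defines a unital
  *-homomorphism C(G) -> C(F) \<otimes> B, and that rho A_G = (A_F \<otimes> id) rho.\<close>
definition qiso_rels :: "qgraph \<Rightarrow> qgraph \<Rightarrow> fa set" where
  "qiso_rels G F = (let NG = qdim G; NF = qdim F in
     {fa_sub (fa_sum (\<lambda>k. fa_smul (qmul G a b k) (fa_p l k)) {..<NG})
             (fa_sum (\<lambda>(i, i'). fa_smul (qmul F i i' l) (fa_mul (fa_p i a) (fa_p i' b)))
                     ({..<NF} \<times> {..<NF}))
       | a b l. a < NG \<and> b < NG \<and> l < NF}
   \<union> {fa_sub (fa_sum (\<lambda>j. fa_smul (qunit G j) (fa_p l j)) {..<NG}) (fa_smul (qunit F l) fa_one)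
       | l. l < NF}
   \<union> {fa_sub (fa_sum (\<lambda>k. fa_smul (qstar G a k) (fa_p l k)) {..<NG})
             (fa_sum (\<lambda>i. fa_smul (qstar F i l) (fa_pstar i a)) {..<NF})
       | a l. a < NG \<and> l < NF}
   \<union> {fa_sub (fa_sum (\<lambda>k. fa_smul (qadj G k j) (fa_p l k)) {..<NG})
             (fa_sum (\<lambda>i. fa_smul (qadj F l i) (fa_p i j)) {..<NF})
       | j l. j < NG \<and> l < NF}
   \<union> {fa_sub (fa_sum (\<lambda>j. fa_mul (fa_p i j) (fa_pstar k j)) {..<NG}) (fa_smul (kdelta i k) fa_one)
       | i k. i < NF \<and> k < NF}
   \<union> {fa_sub (fa_sum (\<lambda>i. fa_mul (fa_pstar i j) (fa_p i k)) {..<NF}) (fa_smul (kdelta j k) fa_one)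
       | j k. j < NG \<and> k < NG})"

text \<open>Quantum isomorphism: the universal *-algebra (free *-algebra modulo the *-ideal
  generated by the relations) is non-zero, i.e. 1 is not in that ideal.\<close>
definition quantum_iso :: "qgraph \<Rightarrow> qgraph \<Rightarrow> bool" where
  "quantum_iso G F \<longleftrightarrow> fa_one \<notin> star_ideal (qiso_rels G F)"

text \<open>mycielskian r G is mu_(r-1)(G) (r copies of C(G)).  For r >= 2 we use the
  orthonormal basis of L^2(mu_(r-1)(G)) with c = sqrt(1 + r delta^2):
  index 0: E_0 = c (1, 0, ..., 0);
  index 1 + (s-1) N + j (1 <= s <= r, j < N): E_(s,j) = (c / delta) e_j placed in copy s.
  For r = 1 (and, by convention, r = 0) it is G itself.\<close>

definition myc_slot :: "nat \<Rightarrow> nat \<Rightarrow> nat" where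
  "myc_slot N t = (t - 1) div N + 1"
definition myc_pos :: "nat \<Rightarrow> nat \<Rightarrow> nat" where
  "myc_pos N t = (t - 1) mod N"

text \<open>feeds r s s': copy s contributes to y_(s') in the adjacency operator.\<close>
definition myc_feeds :: "nat \<Rightarrow> nat \<Rightarrow> nat \<Rightarrow> bool" where
  "myc_feeds r s s' \<longleftrightarrow>
     (s' = 1 \<and> (s = 1 \<or> s = 2)) \<or>
     (2 \<le> s' \<and> s' \<le> r - 1 \<and> (s = s' - 1 \<or> s = s' + 1)) \<or>
     (s' = r \<and> s = r - 1)"

definition mycielskian :: "nat \<Rightarrow> qgraph \<Rightarrow> qgraph" where
  "mycielskian r G = (if r \<le> 1 then G else
    (let N = qdim G; d = qdelta G; c = sqrt (1 + real r * d\<^sup>2);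
         sl = myc_slot N; ps = myc_pos N in
     \<lparr> qdim = 1 + r * N,
       qmul = (\<lambda>t1 t2 t3.
          if t1 = 0 \<and> t2 = 0 \<and> t3 = 0 then complex_of_real c
          else if 1 \<le> t1 \<and> 1 \<le> t2 \<and> 1 \<le> t3 \<and> sl t1 = sl t2 \<and> sl t2 = sl t3
            then complex_of_real (c / d) * qmul G (ps t1) (ps t2) (ps t3)
          else 0),
       qstar = (\<lambda>t1 t2.
          if t1 = 0 \<and> t2 = 0 then 1
          else if 1 \<le> t1 \<and> 1 \<le> t2 \<and> sl t1 = sl t2 then qstar G (ps t1) (ps t2)
          else 0),
       qunit = (\<lambda>t. if t = 0 then complex_of_real (1 / c)
                    else complex_of_real (d / c) * qunit G (ps t)),
       qstate = (\<lambda>t. if t = 0 then complex_of_real (1 / c)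
                    else complex_of_real (d / c) * qstate G (ps t)),
       qdelta = c,
       qadj = (\<lambda>t1 t2.
          if t1 = 0 \<and> t2 = 0 then 0
          else if t1 = 0 then (if sl t2 = r then complex_of_real d * qstate G (ps t2) else 0)
          else if t2 = 0 then (if sl t1 = r then complex_of_real d * qunit G (ps t1) else 0)
          else if myc_feeds r (sl t2) (sl t1) then qadj G (ps t1) (ps t2)
          else 0) \<rparr>))"

end

theory Submission
  imports Defs
begin

lemma fa_mul_assoc: "fa_mul (fa_mul f g) h = fa_mul f (fa_mul g h)"
proof
  fix w :: "gen list"
  let ?n = "length w"
  define F where "F m j = f (take m w) * g (take j (drop m w)) * h (drop (m+j) w)" for m j
  have "fa_mul (fa_mul f g) h w = (\<Sum>k\<le>?n. \<Sum>m\<le>k. F m (k - m))"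
    unfolding fa_mul_def F_def
    by (auto simp: sum_distrib_right min_def drop_take intro!: sum.cong)
  also have "\<dots> = (\<Sum>(m,j)\<in>{(m,j). m+j \<le> ?n}. F m j)"
    by (rule sum.triangle_reindex_eq[symmetric])
  also have "{(m,j). m+j \<le> ?n} = Sigma {..?n} (\<lambda>m. {..?n - m})" by auto
  also have "(\<Sum>(m,j)\<in>Sigma {..?n} (\<lambda>m. {..?n - m}). F m j) = (\<Sum>m\<le>?n. \<Sum>j\<le>?n-m. F m j)"
    by (rule sum.Sigma[symmetric]) auto
  also have "\<dots> = fa_mul f (fa_mul g h) w"
    unfolding fa_mul_def F_def
    by (auto simp: sum_distrib_left mult.assoc add.commute intro!: sum.cong)
  finally show "fa_mul (fa_mul f g) h w = fa_mul f (fa_mul g h) w" .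
qed

lemma fa_one_mul: "fa_mul fa_one g = g"
proof
  fix w :: "gen list"
  have "fa_mul fa_one g w = (\<Sum>k\<le>length w. if k = 0 then g w else 0)"
    unfolding fa_mul_def fa_one_def by (intro sum.cong) auto
  then show "fa_mul fa_one g w = g w" by simp
qed

lemma fa_mul_one: "fa_mul g fa_one = g"
proof
  fix w :: "gen list"
  have "fa_mul g fa_one w = (\<Sum>k\<le>length w. if k = length w then g w else 0)"
    unfolding fa_mul_def fa_one_def by (intro sum.cong) auto
  then show "fa_mul g fa_one w = g w" by simp
qed

lemma fa_mul_add_left: "fa_mul (fa_add f g) h = fa_add (fa_mul f h) (fa_mul g h)"
  by (auto simp: fa_mul_def fa_add_def distrib_right sum.distrib)
lemma fa_mul_add_right: "fa_mul h (fa_add f g) = fa_add (fa_mul h f) (fa_mul h g)"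
  by (auto simp: fa_mul_def fa_add_def distrib_left sum.distrib)

lemma fa_finite_mul: assumes "fa_finite f" "fa_finite g" shows "fa_finite (fa_mul f g)"
proof -
  have "{w. fa_mul f g w \<noteq> 0} \<subseteq> (\<lambda>(u,v). u @ v) ` ({u. f u \<noteq> 0} \<times> {v. g v \<noteq> 0})"
  proof
    fix w assume "w \<in> {w. fa_mul f g w \<noteq> 0}"
    then obtain k where "f (take k w) * g (drop k w) \<noteq> 0"
      unfolding fa_mul_def by (auto elim: sum.not_neutral_contains_not_neutral)
    then show "w \<in> (\<lambda>(u,v). u @ v) ` ({u. f u \<noteq> 0} \<times> {v. g v \<noteq> 0})"
      by (intro image_eqI[of _ _ "(take k w, drop k w)"]) auto
  qed
  moreover have "finite ((\<lambda>(u,v). u @ v) ` ({u. f u \<noteq> 0} \<times> {v. g v \<noteq> 0}))"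
    using assms unfolding fa_finite_def by auto
  ultimately show ?thesis unfolding fa_finite_def by (rule finite_subset)
qed

definition tau :: "gen list \<Rightarrow> gen list" where "tau w = rev (map gen_flip w)"
lemma gen_flip_flip[simp]: "gen_flip (gen_flip g) = g" by (cases g) (auto simp: gen_flip_def)
lemma tau_tau[simp]: "tau (tau w) = w" by (simp add: tau_def rev_map comp_def)
lemma length_tau[simp]: "length (tau w) = length w" by (simp add: tau_def)
lemma inj_tau: "inj tau" by (metis injI tau_tau)

lemma fa_star_star: "fa_star (fa_star f) = f"
  by (auto simp: fa_star_def tau_def[symmetric])

lemma fa_star_mul: "fa_star (fa_mul f g) = fa_mul (fa_star g) (fa_star f)"
proof
  fix w :: "gen list"
  let ?n = "length w"
  have tk: "tau (take k w) = drop (?n - k) (tau w)" for k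
    by (cases "k \<le> ?n") (auto simp: tau_def drop_rev take_map)
  have dk: "tau (drop k w) = take (?n - k) (tau w)" for k
    by (cases "k \<le> ?n") (auto simp: tau_def take_rev drop_map)
  have "fa_mul (fa_star g) (fa_star f) w = (\<Sum>k\<le>?n. cnj (g (drop (?n - k) (tau w))) * cnj (f (take (?n - k) (tau w))))"
    unfolding fa_mul_def fa_star_def tau_def[symmetric] tk dk by simp
  also have "\<dots> = (\<Sum>k\<le>?n. cnj (g (drop k (tau w))) * cnj (f (take k (tau w))))"
    by (rule sum.reindex_bij_witness[where i="\<lambda>k. ?n - k" and j="\<lambda>k. ?n - k"]) auto
  also have "\<dots> = fa_star (fa_mul f g) w"
    unfolding fa_mul_def fa_star_def tau_def[symmetric] by (simp add: mult.commute)
  finally show "fa_star (fa_mul f g) w = fa_mul (fa_star g) (fa_star f) w" ..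
qed

lemma fa_star_add: "fa_star (fa_add f g) = fa_add (fa_star f) (fa_star g)"
  by (auto simp: fa_star_def fa_add_def)
lemma fa_star_zero: "fa_star fa_zero = fa_zero"
  by (auto simp: fa_star_def fa_zero_def)

lemma fa_finite_star: assumes "fa_finite f" shows "fa_finite (fa_star f)"
proof -
  have "{w. fa_star f w \<noteq> 0} = tau ` {w. f w \<noteq> 0}"
    by (auto simp: fa_star_def tau_def[symmetric] image_iff) (metis tau_tau)
  then show ?thesis using assms by (simp add: fa_finite_def)
qed

lemma star_ideal_star: "x \<in> star_ideal R \<Longrightarrow> fa_star x \<in> star_ideal R"
proof (induction rule: star_ideal.induct)
  case (rel r) then show ?case by (rule star_ideal.rel_star)
next
  case (rel_star r) then show ?case by (simp add: fa_star_star star_ideal.rel)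
next
  case zero then show ?case by (simp add: fa_star_zero star_ideal.zero)
next
  case (add x y) then show ?case by (simp add: fa_star_add star_ideal.add)
next
  case (mult x a b) then show ?case
    by (simp add: fa_star_mul fa_mul_assoc[symmetric] star_ideal.mult fa_finite_star)
qed

typedef ncp = "{f::fa. fa_finite f}" morphisms rep Abs
  by (rule exI[of _ fa_zero]) (simp add: fa_finite_def fa_zero_def)

setup_lifting type_definition_ncp

lemma rep_finite: "fa_finite (rep x)" using rep by auto

instantiation ncp :: ring_1
begin
lift_definition zero_ncp :: ncp is fa_zero by (simp add: fa_finite_def fa_zero_def)
lift_definition one_ncp :: ncp is fa_one by (simp add: fa_finite_def fa_one_def)
lift_definition plus_ncp :: "ncp \<Rightarrow> ncp \<Rightarrow> ncp" is fa_add
proof -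
  fix f g assume "fa_finite f" "fa_finite g"
  then show "fa_finite (fa_add f g)" unfolding fa_finite_def fa_add_def
    by (rule finite_subset[rotated, OF finite_UnI]) auto
qed
lift_definition uminus_ncp :: "ncp \<Rightarrow> ncp" is "\<lambda>f w. - f w" by (simp add: fa_finite_def)
lift_definition minus_ncp :: "ncp \<Rightarrow> ncp \<Rightarrow> ncp" is fa_sub
proof -
  fix f g assume "fa_finite f" "fa_finite g"
  then show "fa_finite (fa_sub f g)" unfolding fa_finite_def fa_sub_def
    by (rule finite_subset[rotated, OF finite_UnI]) auto
qed
lift_definition times_ncp :: "ncp \<Rightarrow> ncp \<Rightarrow> ncp" is fa_mul by (rule fa_finite_mul)
instance
proof
  fix a b c :: ncp
  show "a + b + c = a + (b + c)" by transfer (auto simp: fa_add_def)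
  show "a + b = b + a" by transfer (auto simp: fa_add_def)
  show "0 + a = a" by transfer (auto simp: fa_add_def fa_zero_def)
  show "- a + a = 0" by transfer (auto simp: fa_add_def fa_zero_def)
  show "a - b = a + - b" by transfer (auto simp: fa_add_def fa_sub_def)
  show "a * b * c = a * (b * c)" by transfer (rule fa_mul_assoc)
  show "(a + b) * c = a * c + b * c" by transfer (rule fa_mul_add_left)
  show "a * (b + c) = a * b + a * c" by transfer (rule fa_mul_add_right)
  show "1 * a = a" by transfer (rule fa_one_mul)
  show "a * 1 = a" by transfer (rule fa_mul_one)
  show "(0::ncp) \<noteq> 1" by transfer (auto simp: fa_zero_def fa_one_def fun_eq_iff)
qed
end

lemma rep_add: "rep (x + y) = fa_add (rep x) (rep y)" by transfer simp
lemma rep_sub: "rep (x - y) = fa_sub (rep x) (rep y)" by transfer simp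
lemma rep_mul: "rep (x * y) = fa_mul (rep x) (rep y)" by transfer simp
lemma rep_one: "rep 1 = fa_one" by transfer simp
lemma rep_zero: "rep 0 = fa_zero" by transfer simp
lemma rep_add_app: "rep (x + y) w = rep x w + rep y w" by (simp add: rep_add fa_add_def)
lemma rep_zero_app[simp]: "rep 0 w = 0" by (simp add: rep_zero fa_zero_def)
lemma rep_sum_app: "finite A \<Longrightarrow> rep (sum F A) w = (\<Sum>a\<in>A. rep (F a) w)"
  by (induction A rule: finite_induct) (auto simp: rep_add_app)
lemma rep_sum: "finite A \<Longrightarrow> rep (sum F A) = fa_sum (\<lambda>a. rep (F a)) A"
  by (auto simp: rep_sum_app fa_sum_def)

lift_definition cs :: "complex \<Rightarrow> ncp" is "\<lambda>c w. if w = [] then c else 0"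
  by (auto simp: fa_finite_def intro: finite_subset[of _ "{[]}"])

lemma fa_cs_mul: "fa_mul (\<lambda>w. if w = [] then c else 0) f = fa_smul c f"
proof
  fix w
  have "fa_mul (\<lambda>w. if w = [] then c else 0) f w = (\<Sum>k\<le>length w. if k = 0 then c * f w else 0)"
    unfolding fa_mul_def by (intro sum.cong) auto
  then show "fa_mul (\<lambda>w. if w = [] then c else 0) f w = fa_smul c f w" by (simp add: fa_smul_def)
qed
lemma rep_cs_mul: "rep (cs c * x) = fa_smul c (rep x)"
  by transfer (rule fa_cs_mul)
lemma rep_cs_mul_app: "rep (cs c * x) w = c * rep x w" by (simp add: rep_cs_mul fa_smul_def)
lemma rep_cs: "rep (cs c) = fa_smul c fa_one"
  by transfer (auto simp: fa_smul_def fa_one_def)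

lemma cs_mul: "cs (a * b) = cs a * cs b"
  by (rule rep_inject[THEN iffD1]) (simp add: rep_cs_mul, simp add: rep_cs fa_smul_def mult.assoc)
lemma cs_add: "cs (a + b) = cs a + cs b"
  by transfer (auto simp: fa_add_def)
lemma cs_zero[simp]: "cs 0 = 0" by transfer (auto simp: fa_zero_def)
lemma cs_one[simp]: "cs 1 = 1" by transfer (auto simp: fa_one_def)
lemma cs_uminus: "cs (- a) = - cs a" by transfer auto
lemma cs_diff: "cs (a - b) = cs a - cs b" by transfer (auto simp: fa_sub_def)
lemma cs_sum: "cs (sum f A) = (\<Sum>a\<in>A. cs (f a))"
  by (induction A rule: infinite_finite_induct) (auto simp: cs_add)
lemma cs_comm: "cs c * x = x * cs c"
proof (rule rep_inject[THEN iffD1])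
  have "fa_mul (rep x) (rep (cs c)) = fa_smul c (rep x)"
  proof
    fix w
    have "fa_mul (rep x) (rep (cs c)) w = (\<Sum>k\<le>length w. if k = length w then c * rep x w else 0)"
      unfolding fa_mul_def rep_cs by (intro sum.cong) (auto simp: fa_smul_def fa_one_def)
    then show "fa_mul (rep x) (rep (cs c)) w = fa_smul c (rep x) w" by (simp add: fa_smul_def)
  qed
  moreover have "rep (cs c * x) = fa_smul c (rep x)" by (rule rep_cs_mul)
  moreover have "rep (x * cs c) = fa_mul (rep x) (rep (cs c))" by (rule rep_mul)
  ultimately show "rep (cs c * x) = rep (x * cs c)" by (simp only:)
qed
lemma cs_mult_left_comm: "x * (cs c * y) = cs c * (x * y)"
  by (metis cs_comm mult.assoc)

lemma cs_inj: "cs a = cs b \<Longrightarrow> a = b"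
  by transfer (drule fun_cong[of _ _ "[]"], simp)

lift_definition st :: "ncp \<Rightarrow> ncp" is fa_star by (rule fa_finite_star)
lemma st_mul: "st (x * y) = st y * st x" by transfer (rule fa_star_mul)
lemma st_add: "st (x + y) = st x + st y" by transfer (rule fa_star_add)
lemma st_st[simp]: "st (st x) = x" by transfer (rule fa_star_star)
lemma st_zero[simp]: "st 0 = 0" by transfer (rule fa_star_zero)
lemma st_cs: "st (cs c) = cs (cnj c)"
  by transfer (auto simp: fa_star_def fun_eq_iff)
lemma st_one[simp]: "st 1 = 1" using st_cs[of 1] by simp
lemma st_sum: "st (sum f A) = (\<Sum>a\<in>A. st (f a))"
  by (induction A rule: infinite_finite_induct) (auto simp: st_add)
lemma st_uminus: "st (- x) = - st x"
proof -
  have "st (- x) + st x = 0" by (simp add: st_add[symmetric])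
  then show ?thesis by (simp add: eq_neg_iff_add_eq_0)
qed
lemma st_diff: "st (x - y) = st x - st y"
  by (simp only: diff_conv_add_uminus st_add st_uminus)
lemma rep_st: "rep (st x) = fa_star (rep x)" by transfer simp

lift_definition gn :: "gen \<Rightarrow> ncp" is fa_gen
  by (simp add: fa_finite_def fa_gen_def)
lemma rep_gn: "rep (gn g) = fa_gen g" by transfer simp
lemma tau_eq_iff: "tau w = v \<longleftrightarrow> w = tau v" by (metis tau_tau)
lemma tau_single: "tau [g] = [gen_flip g]" by (simp add: tau_def)
lemma st_gn: "st (gn g) = gn (gen_flip g)"
  by transfer (auto simp: fa_star_def fa_gen_def fun_eq_iff tau_def[symmetric] tau_eq_iff tau_single)

lift_definition word :: "gen list \<Rightarrow> ncp" is "\<lambda>w v. if v = w then 1 else 0"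
  by (simp add: fa_finite_def)

lemma word_append: "word (u @ v) = word u * word v"
proof transfer
  fix u v :: "gen list"
  show "(\<lambda>x. if x = u @ v then 1 else 0) = fa_mul (\<lambda>x. if x = u then 1 else 0) (\<lambda>x. if x = v then 1 else 0)"
  proof
    fix w :: "gen list"
    have "fa_mul (\<lambda>x. if x = u then 1 else 0) (\<lambda>x. if x = v then 1 else 0) w
        = (\<Sum>k\<le>length w. if k = length u then (if w = u @ v then 1 else 0) else 0)"
      unfolding fa_mul_def
    proof (intro sum.cong refl)
      fix k assume k: "k \<in> {..length w}"
      have "(take k w = u \<and> drop k w = v) \<longleftrightarrow> (k = length u \<and> w = u @ v)"
      proof
        assume h: "take k w = u \<and> drop k w = v"
        have "length (take k w) = k" using k by simp
        then have "length u = k" using h by simp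
        moreover have "w = u @ v" using append_take_drop_id[of k w] h by simp
        ultimately show "k = length u \<and> w = u @ v" by simp
      qed auto
      then show "(if take k w = u then 1 else 0) * (if drop k w = v then 1 else 0)
           = (if k = length u then (if w = u @ v then 1 else 0) else (0::complex))"
      proof (cases "take k w = u \<and> drop k w = v")
        case True
        with \<open>_ \<longleftrightarrow> _\<close> have "k = length u \<and> w = u @ v" by blast
        with True show ?thesis by simp
      next
        case False
        with \<open>_ \<longleftrightarrow> _\<close> have "\<not> (k = length u \<and> w = u @ v)" by blast
        with False show ?thesis by auto
      qed
    qed
    also have "\<dots> = (if w = u @ v then 1 else 0)" by auto
    finally show "(if w = u @ v then 1 else (0::complex)) = fa_mul (\<lambda>x. if x = u then 1 else 0) (\<lambda>x. if x = v then 1 else 0) w" ..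
  qed
qed

lemma word_Nil: "word [] = 1" by transfer (auto simp: fa_one_def)
lemma word_single: "word [g] = gn g" by transfer (auto simp: fa_gen_def)
lemma word_Cons: "word (g # w) = gn g * word w"
  using word_append[of "[g]" w] by (simp add: word_single)

definition supp :: "ncp \<Rightarrow> gen list set" where "supp x = {w. rep x w \<noteq> 0}"
lemma finite_supp: "finite (supp x)" using rep_finite[of x] by (simp add: supp_def fa_finite_def)

lemma rep_cs_word: "rep (cs c * word u) w = (if w = u then c else 0)"
  by (simp add: rep_cs_mul_app) (transfer, auto)

lemma ncp_eqI: "(\<And>w. rep x w = rep y w) \<Longrightarrow> x = y"
  by (metis ext rep_inject)

lemma ncp_repr: assumes "finite S" "supp x \<subseteq> S"
  shows "x = (\<Sum>u\<in>S. cs (rep x u) * word u)"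
proof (rule ncp_eqI)
  fix w
  have "rep (\<Sum>u\<in>S. cs (rep x u) * word u) w = (\<Sum>u\<in>S. if w = u then rep x u else 0)"
    using assms by (simp add: rep_sum_app rep_cs_word)
  also have "\<dots> = rep x w" using assms by (auto simp: supp_def)
  finally show "rep x w = rep (\<Sum>u\<in>S. cs (rep x u) * word u) w" ..
qed

definition J :: "fa set \<Rightarrow> ncp set" where "J R = {x. rep x \<in> star_ideal R}"

lemma J_zero[simp]: "0 \<in> J R" by (simp add: J_def rep_zero star_ideal.zero)
lemma J_add: "x \<in> J R \<Longrightarrow> y \<in> J R \<Longrightarrow> x + y \<in> J R"
  by (simp add: J_def rep_add star_ideal.add)
lemma J_mult: "x \<in> J R \<Longrightarrow> a * x * b \<in> J R"
  by (simp add: J_def rep_mul star_ideal.mult rep_finite)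
lemma J_mul_left: "x \<in> J R \<Longrightarrow> a * x \<in> J R"
  using J_mult[of x R a 1] by simp
lemma J_mul_right: "x \<in> J R \<Longrightarrow> x * b \<in> J R"
  using J_mult[of x R 1 b] by simp
lemma J_uminus: "x \<in> J R \<Longrightarrow> - x \<in> J R"
  using J_mul_left[of x R "-1"] by simp
lemma J_diff: "x \<in> J R \<Longrightarrow> y \<in> J R \<Longrightarrow> x - y \<in> J R"
  unfolding diff_conv_add_uminus by (intro J_add J_uminus)
lemma J_sum: "(\<And>a. a \<in> A \<Longrightarrow> F a \<in> J R) \<Longrightarrow> sum F A \<in> J R"
  by (induction A rule: infinite_finite_induct) (auto intro: J_add)
lemma J_st: "x \<in> J R \<Longrightarrow> st x \<in> J R"
  by (simp add: J_def rep_st star_ideal_star)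
lemma J_rel: "rep x \<in> R \<Longrightarrow> x \<in> J R"
  by (simp add: J_def star_ideal.rel)
lemma J_one: "1 \<in> J R \<longleftrightarrow> fa_one \<in> star_ideal R"
  by (simp add: J_def rep_one)

definition phiw :: "(gen \<Rightarrow> ncp) \<Rightarrow> gen list \<Rightarrow> ncp" where
  "phiw img w = prod_list (map img w)"
definition phi :: "(gen \<Rightarrow> ncp) \<Rightarrow> ncp \<Rightarrow> ncp" where
  "phi img x = (\<Sum>u\<in>supp x. cs (rep x u) * phiw img u)"

lemma phiw_append: "phiw img (u @ v) = phiw img u * phiw img v"
  by (simp add: phiw_def)

lemma phi_repr: assumes "finite S" "supp x \<subseteq> S"
  shows "phi img x = (\<Sum>u\<in>S. cs (rep x u) * phiw img u)"
  unfolding phi_def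
  by (rule sum.mono_neutral_left) (use assms in \<open>auto simp: supp_def\<close>)

lemma phi_add: "phi img (x + y) = phi img x + phi img y"
proof -
  let ?S = "supp x \<union> supp y"
  have f: "finite ?S" by (simp add: finite_supp)
  have "phi img (x + y) = (\<Sum>u\<in>?S. cs (rep (x + y) u) * phiw img u)"
    by (rule phi_repr[OF f]) (auto simp: supp_def rep_add_app)
  also have "\<dots> = (\<Sum>u\<in>?S. cs (rep x u + rep y u) * phiw img u)"
    by (simp add: rep_add_app)
  also have "\<dots> = (\<Sum>u\<in>?S. cs (rep x u) * phiw img u) + (\<Sum>u\<in>?S. cs (rep y u) * phiw img u)"
    by (simp add: cs_add distrib_right sum.distrib)
  also have "\<dots> = phi img x + phi img y"
    using f by (simp add: phi_repr[symmetric])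
  finally show ?thesis .
qed

lemma phi_zero[simp]: "phi img 0 = 0" by (simp add: phi_def supp_def)

lemma phi_sum: "phi img (sum F A) = (\<Sum>a\<in>A. phi img (F a))"
  by (induction A rule: infinite_finite_induct) (auto simp: phi_add)

lemma phi_cs_mul: "phi img (cs c * x) = cs c * phi img x"
proof -
  have "phi img (cs c * x) = (\<Sum>u\<in>supp x. cs (rep (cs c * x) u) * phiw img u)"
    by (rule phi_repr) (auto simp: supp_def rep_cs_mul_app finite_supp[unfolded supp_def])
  also have "\<dots> = (\<Sum>u\<in>supp x. cs (c * rep x u) * phiw img u)"
    by (simp add: rep_cs_mul_app)
  also have "\<dots> = cs c * phi img x"
    by (simp add: phi_def sum_distrib_left cs_mul mult.assoc)
  finally show ?thesis .
qed

lemma phi_cs_word: "phi img (cs c * word u) = cs c * phiw img u"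
proof -
  have "phi img (cs c * word u) = (\<Sum>v\<in>{u}. cs (rep (cs c * word u) v) * phiw img v)"
    by (rule phi_repr) (auto simp: supp_def rep_cs_word)
  then show ?thesis by (simp add: rep_cs_word)
qed

lemma cs_pair_mul: "(cs a * x) * (cs b * y) = cs (a * b) * (x * y)"
proof -
  have "(cs a * x) * (cs b * y) = cs a * ((x * cs b) * y)" by (simp only: mult.assoc)
  also have "\<dots> = cs a * (cs b * x * y)" by (simp only: cs_comm)
  also have "\<dots> = cs (a * b) * (x * y)" by (simp only: cs_mul mult.assoc)
  finally show ?thesis .
qed

lemma phi_mul: "phi img (x * y) = phi img x * phi img y"
proof -
  let ?A = "supp x" and ?B = "supp y"
  have x: "x = (\<Sum>u\<in>?A. cs (rep x u) * word u)" by (rule ncp_repr) (auto simp: finite_supp)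
  have y: "y = (\<Sum>v\<in>?B. cs (rep y v) * word v)" by (rule ncp_repr) (auto simp: finite_supp)
  have "x * y = (\<Sum>u\<in>?A. \<Sum>v\<in>?B. (cs (rep x u) * word u) * (cs (rep y v) * word v))"
    by (subst x, subst y) (simp only: sum_product)
  also have "\<dots> = (\<Sum>u\<in>?A. \<Sum>v\<in>?B. cs (rep x u * rep y v) * word (u @ v))"
    by (simp only: word_append cs_pair_mul)
  finally have xy: "x * y = \<dots>" .
  have "phi img (x * y) = (\<Sum>u\<in>?A. \<Sum>v\<in>?B. cs (rep x u * rep y v) * phiw img (u @ v))"
    by (subst xy) (simp add: phi_sum phi_cs_word)
  also have "\<dots> = (\<Sum>u\<in>?A. \<Sum>v\<in>?B. (cs (rep x u) * phiw img u) * (cs (rep y v) * phiw img v))"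
    by (simp only: phiw_append cs_pair_mul)
  also have "\<dots> = phi img x * phi img y"
    by (simp only: phi_def sum_product)
  finally show ?thesis .
qed

lemma phi_one: "phi img 1 = 1"
  using phi_cs_word[of img 1 "[]"] by (simp add: word_Nil phiw_def)

lemma phi_gn: "phi img (gn g) = img g"
  using phi_cs_word[of img 1 "[g]"] by (simp add: word_single phiw_def)

lemma phi_cs: "phi img (cs c) = cs c"
  using phi_cs_mul[of img c 1] by (simp add: phi_one)

lemma phi_uminus: "phi img (- x) = - phi img x"
proof -
  have "phi img (- x) + phi img x = 0" by (simp add: phi_add[symmetric])
  then show ?thesis by (simp add: eq_neg_iff_add_eq_0)
qed

lemma phi_diff: "phi img (x - y) = phi img x - phi img y"
  by (simp only: diff_conv_add_uminus phi_add phi_uminus)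

lemma st_prod_list: "st (prod_list xs) = prod_list (rev (map st xs))"
  by (induction xs) (auto simp: st_mul)

lemma phi_st:
  assumes img: "\<And>g. img (gen_flip g) = st (img g)"
  shows "phi img (st x) = st (phi img x)"
proof -
  have pw: "phiw img (tau u) = st (phiw img u)" for u
    by (simp add: phiw_def tau_def st_prod_list rev_map comp_def img)
  have s: "supp (st x) = tau ` supp x"
    by (auto simp: supp_def rep_st fa_star_def tau_def[symmetric] image_iff) (metis tau_tau)
  have "phi img (st x) = (\<Sum>w\<in>tau ` supp x. cs (rep (st x) w) * phiw img w)"
    by (simp add: phi_def s)
  also have "\<dots> = (\<Sum>u\<in>supp x. cs (rep (st x) (tau u)) * phiw img (tau u))"
    by (rule sum.reindex[unfolded comp_def]) (rule inj_on_subset[OF inj_tau], simp)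
  also have "\<dots> = (\<Sum>u\<in>supp x. st (cs (rep x u) * phiw img u))"
    by (simp add: rep_st fa_star_def tau_def[symmetric] pw st_mul st_cs cs_comm)
  also have "\<dots> = st (phi img x)" by (simp add: phi_def st_sum)
  finally show ?thesis .
qed

definition cg :: "fa set \<Rightarrow> ncp \<Rightarrow> ncp \<Rightarrow> bool" where "cg R x y \<longleftrightarrow> x - y \<in> J R"

lemma cg_refl[simp]: "cg R x x" by (simp add: cg_def)
lemma cg_sym: "cg R x y \<Longrightarrow> cg R y x"
  unfolding cg_def using J_uminus by fastforce
lemma cg_trans[trans]: "cg R x y \<Longrightarrow> cg R y z \<Longrightarrow> cg R x z"
  unfolding cg_def using J_add by fastforce
lemma cg_add: "cg R x x' \<Longrightarrow> cg R y y' \<Longrightarrow> cg R (x + y) (x' + y')"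
proof -
  assume "cg R x x'" "cg R y y'"
  then have "(x - x') + (y - y') \<in> J R" unfolding cg_def by (rule J_add)
  moreover have "(x - x') + (y - y') = (x + y) - (x' + y')" by (simp add: algebra_simps)
  ultimately show ?thesis unfolding cg_def by simp
qed
lemma cg_diff: "cg R x x' \<Longrightarrow> cg R y y' \<Longrightarrow> cg R (x - y) (x' - y')"
proof -
  assume "cg R x x'" "cg R y y'"
  then have "(x - x') - (y - y') \<in> J R" unfolding cg_def by (rule J_diff)
  moreover have "(x - x') - (y - y') = (x - y) - (x' - y')" by (simp add: algebra_simps)
  ultimately show ?thesis unfolding cg_def by simp
qed
lemma cg_mul_left: "cg R y y' \<Longrightarrow> cg R (x * y) (x * y')"
  unfolding cg_def using J_mul_left[of "y - y'" R x] by (simp add: algebra_simps)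
lemma cg_mul_right: "cg R x x' \<Longrightarrow> cg R (x * y) (x' * y)"
  unfolding cg_def using J_mul_right[of "x - x'" R y] by (simp add: algebra_simps)
lemma cg_mul: "cg R x x' \<Longrightarrow> cg R y y' \<Longrightarrow> cg R (x * y) (x' * y')"
  by (meson cg_mul_left cg_mul_right cg_trans)
lemma cg_sum: "(\<And>a. a \<in> A \<Longrightarrow> cg R (F a) (G a)) \<Longrightarrow> cg R (sum F A) (sum G A)"
proof (induction A rule: infinite_finite_induct)
  case (insert a A) then show ?case by (simp add: cg_add)
qed auto
lemma cg_st: "cg R x y \<Longrightarrow> cg R (st x) (st y)"
  unfolding cg_def using J_st by (fastforce simp: st_diff[symmetric])
lemma cg_J: "cg R x y \<longleftrightarrow> x - y \<in> J R" by (simp add: cg_def)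

definition P :: "nat \<Rightarrow> nat \<Rightarrow> ncp" where "P i j = gn (i, j, False)"
definition Ps :: "nat \<Rightarrow> nat \<Rightarrow> ncp" where "Ps i j = gn (i, j, True)"
lemma st_P[simp]: "st (P i j) = Ps i j" by (simp add: P_def Ps_def st_gn gen_flip_def)
lemma st_Ps[simp]: "st (Ps i j) = P i j" by (simp add: P_def Ps_def st_gn gen_flip_def)

lemma st_lin: "st (\<Sum>k\<in>A. cs (c k) * X k) = (\<Sum>k\<in>A. cs (cnj (c k)) * st (X k))"
  by (simp add: st_sum st_mul st_cs cs_comm)

lemma prod_lin: "(\<Sum>k\<in>A. cs (a k) * X k) * (\<Sum>k'\<in>B. cs (b k') * Y k')
   = (\<Sum>k\<in>A. \<Sum>k'\<in>B. cs (a k * b k') * (X k * Y k'))"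
  by (simp only: sum_product cs_pair_mul)

definition relM where "relM G F a b l =
  (\<Sum>k<qdim G. cs (qmul G a b k) * P l k) -
  (\<Sum>(i,i')\<in>{..<qdim F}\<times>{..<qdim F}. cs (qmul F i i' l) * (P i a * P i' b))"
definition relU where "relU G F l = (\<Sum>j<qdim G. cs (qunit G j) * P l j) - cs (qunit F l)"
definition relS where "relS G F a l =
  (\<Sum>k<qdim G. cs (qstar G a k) * P l k) - (\<Sum>i<qdim F. cs (qstar F i l) * Ps i a)"
definition relA where "relA G F j l =
  (\<Sum>k<qdim G. cs (qadj G k j) * P l k) - (\<Sum>i<qdim F. cs (qadj F l i) * P i j)"
definition relU1 where "relU1 G F i k = (\<Sum>j<qdim G. P i j * Ps k j) - cs (kdelta i k)"
definition relU2 where "relU2 G F j k = (\<Sum>i<qdim F. Ps i j * P i k) - cs (kdelta j k)"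

lemmas rep_simps1 = rep_sub rep_sum rep_cs_mul split_def
lemmas rep_simps2 = rep_mul rep_gn rep_cs rep_one P_def Ps_def

lemma rep_relM: "rep (relM G F a b l) = fa_sub (fa_sum (\<lambda>k. fa_smul (qmul G a b k) (fa_p l k)) {..<qdim G})
             (fa_sum (\<lambda>(i, i'). fa_smul (qmul F i i' l) (fa_mul (fa_p i a) (fa_p i' b)))
                     ({..<qdim F} \<times> {..<qdim F}))"
  by (simp add: relM_def rep_simps1, simp add: rep_simps2)
lemma rep_relU: "rep (relU G F l) = fa_sub (fa_sum (\<lambda>j. fa_smul (qunit G j) (fa_p l j)) {..<qdim G}) (fa_smul (qunit F l) fa_one)"
  by (simp add: relU_def rep_simps1, simp add: rep_simps2)
lemma rep_relS: "rep (relS G F a l) = fa_sub (fa_sum (\<lambda>k. fa_smul (qstar G a k) (fa_p l k)) {..<qdim G})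
             (fa_sum (\<lambda>i. fa_smul (qstar F i l) (fa_pstar i a)) {..<qdim F})"
  by (simp add: relS_def rep_simps1, simp add: rep_simps2)
lemma rep_relA: "rep (relA G F j l) = fa_sub (fa_sum (\<lambda>k. fa_smul (qadj G k j) (fa_p l k)) {..<qdim G})
             (fa_sum (\<lambda>i. fa_smul (qadj F l i) (fa_p i j)) {..<qdim F})"
  by (simp add: relA_def rep_simps1, simp add: rep_simps2)
lemma rep_relU1: "rep (relU1 G F i k) = fa_sub (fa_sum (\<lambda>j. fa_mul (fa_p i j) (fa_pstar k j)) {..<qdim G}) (fa_smul (kdelta i k) fa_one)"
  by (simp add: relU1_def rep_simps1, simp add: rep_simps2)
lemma rep_relU2: "rep (relU2 G F j k) = fa_sub (fa_sum (\<lambda>i. fa_mul (fa_pstar i j) (fa_p i k)) {..<qdim F}) (fa_smul (kdelta j k) fa_one)"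
  by (simp add: relU2_def rep_simps1, simp add: rep_simps2)

lemma qiso_rels_cases:
  assumes "r \<in> qiso_rels G F"
  shows "(\<exists>a b l. a < qdim G \<and> b < qdim G \<and> l < qdim F \<and> r = rep (relM G F a b l)) \<or>
         (\<exists>l. l < qdim F \<and> r = rep (relU G F l)) \<or>
         (\<exists>a l. a < qdim G \<and> l < qdim F \<and> r = rep (relS G F a l)) \<or>
         (\<exists>j l. j < qdim G \<and> l < qdim F \<and> r = rep (relA G F j l)) \<or>
         (\<exists>i k. i < qdim F \<and> k < qdim F \<and> r = rep (relU1 G F i k)) \<or>
         (\<exists>j k. j < qdim G \<and> k < qdim G \<and> r = rep (relU2 G F j k))"
  using assms unfolding qiso_rels_def Let_def
  by (simp only: rep_relM rep_relU rep_relS rep_relA rep_relU1 rep_relU2) blast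

abbreviation JJ where "JJ G F \<equiv> qiso_rels G F"

lemma relM_cg: "a < qdim G \<Longrightarrow> b < qdim G \<Longrightarrow> l < qdim F \<Longrightarrow>
  cg (JJ G F) (\<Sum>k<qdim G. cs (qmul G a b k) * P l k)
   (\<Sum>(i,i')\<in>{..<qdim F}\<times>{..<qdim F}. cs (qmul F i i' l) * (P i a * P i' b))"
  unfolding cg_def relM_def[symmetric]
  by (rule J_rel) (unfold rep_relM qiso_rels_def Let_def, blast)
lemma relU_cg: "l < qdim F \<Longrightarrow>
  cg (JJ G F) (\<Sum>j<qdim G. cs (qunit G j) * P l j) (cs (qunit F l))"
  unfolding cg_def relU_def[symmetric]
  by (rule J_rel) (unfold rep_relU qiso_rels_def Let_def, blast)
lemma relS_cg: "a < qdim G \<Longrightarrow> l < qdim F \<Longrightarrow>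
  cg (JJ G F) (\<Sum>k<qdim G. cs (qstar G a k) * P l k) (\<Sum>i<qdim F. cs (qstar F i l) * Ps i a)"
  unfolding cg_def relS_def[symmetric]
  by (rule J_rel) (unfold rep_relS qiso_rels_def Let_def, blast)
lemma relA_cg: "j < qdim G \<Longrightarrow> l < qdim F \<Longrightarrow>
  cg (JJ G F) (\<Sum>k<qdim G. cs (qadj G k j) * P l k) (\<Sum>i<qdim F. cs (qadj F l i) * P i j)"
  unfolding cg_def relA_def[symmetric]
  by (rule J_rel) (unfold rep_relA qiso_rels_def Let_def, blast)
lemma relU1_cg: assumes a: "i < qdim F" "k < qdim F" shows
  "cg (JJ G F) (\<Sum>j<qdim G. P i j * Ps k j) (cs (kdelta i k))"
proof -
  have "relU1 G F i k \<in> J (JJ G F)" by (rule J_rel) (use a in \<open>unfold rep_relU1 qiso_rels_def Let_def, blast\<close>)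
  then show ?thesis by (simp add: cg_def relU1_def)
qed
lemma relU2_cg: assumes a: "j < qdim G" "k < qdim G" shows
  "cg (JJ G F) (\<Sum>i<qdim F. Ps i j * P i k) (cs (kdelta j k))"
proof -
  have "relU2 G F j k \<in> J (JJ G F)" by (rule J_rel) (use a in \<open>unfold rep_relU2 qiso_rels_def Let_def, blast\<close>)
  then show ?thesis by (simp add: cg_def relU2_def)
qed

lemma qdim_pos: assumes G: "is_qgraph G" shows "0 < qdim G"
proof (rule ccontr)
  assume "\<not> 0 < qdim G" then have "qdim G = 0" by simp
  with G show False by (simp add: is_qgraph_def is_gns_state_def vpsi_def)
qed

lemma delta_pos: "is_qgraph G \<Longrightarrow> 0 < qdelta G"
  by (auto simp: is_qgraph_def is_delta_form_def)

lemma delta_form: "is_qgraph G \<Longrightarrow> k < qdim G \<Longrightarrow> l < qdim G \<Longrightarrow>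
  (\<Sum>i<qdim G. \<Sum>j<qdim G. qmul G i j l * cnj (qmul G i j k))
          = complex_of_real ((qdelta G)\<^sup>2) * (if k = l then 1 else 0)"
  by (auto simp: is_qgraph_def is_delta_form_def)

lemma qstate_unit:
  assumes G: "is_qgraph G" and k: "k < qdim G"
  shows "qstate G k = cnj (qunit G k)"
proof -
  let ?N = "qdim G" let ?V = "vecs ?N"
  have C: "is_fd_cstar_algebra G" and S: "is_gns_state G" using G by (auto simp: is_qgraph_def)
  have one: "vone G \<in> ?V" and ul: "\<And>x. x \<in> ?V \<Longrightarrow> vmul G (vone G) x = x"
    and ur: "\<And>x. x \<in> ?V \<Longrightarrow> vmul G x (vone G) = x"
    and ss: "\<And>x. x \<in> ?V \<Longrightarrow> vstar G (vstar G x) = x"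
    and sm: "\<And>x y. x \<in> ?V \<Longrightarrow> y \<in> ?V \<Longrightarrow> vstar G (vmul G x y) = vmul G (vstar G y) (vstar G x)"
    using C unfolding is_fd_cstar_algebra_def Let_def by blast+
  have sV: "vstar G x \<in> ?V" for x by (auto simp: vecs_def vstar_def)
  have "vstar G (vone G) = vmul G (vstar G (vone G)) (vone G)" using ur[OF sV] by simp
  then have "vstar G (vstar G (vone G)) = vstar G (vmul G (vstar G (vone G)) (vone G))" by simp
  also have "\<dots> = vmul G (vstar G (vone G)) (vstar G (vstar G (vone G)))" using sm[OF sV one] .
  also have "\<dots> = vmul G (vstar G (vone G)) (vone G)" using ss[OF one] by simp
  also have "\<dots> = vstar G (vone G)" using ur[OF sV] by simp
  finally have s1: "vstar G (vone G) = vone G" using ss[OF one] by simp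
  define e where "e = (\<lambda>i. if i = k then (1::complex) else 0)"
  have eV: "e \<in> ?V" using k by (auto simp: vecs_def e_def)
  have "vpsi G (vmul G (vstar G (vone G)) e) = vinner ?N (vone G) e"
    using S one eV unfolding is_gns_state_def by blast
  then have "vpsi G e = vinner ?N (vone G) e" by (simp add: s1 ul[OF eV])
  moreover have "vpsi G e = (\<Sum>i<?N. if i = k then qstate G i else 0)"
    unfolding vpsi_def e_def by (intro sum.cong) auto
  moreover have "vinner ?N (vone G) e = (\<Sum>i<?N. if i = k then cnj (qunit G i) else 0)"
    unfolding vinner_def e_def vone_def by (intro sum.cong) auto
  ultimately show ?thesis using k by simp
qed

context
  fixes G F :: qgraph
  assumes G: "is_qgraph G" and F: "is_qgraph F"
begin

abbreviation "NG \<equiv> qdim G"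
abbreviation "NF \<equiv> qdim F"
abbreviation "RR \<equiv> JJ G F"

lemma kd_sum: "j0 < n \<Longrightarrow> (\<Sum>j<n. cs (a j) * cs (kdelta j j0)) = cs (a j0)"
  by (simp add: cs_mul[symmetric] kdelta_def if_distrib cong: if_cong)
lemma kd_sum': assumes "j0 < n" shows "(\<Sum>j<n. X j * cs (kdelta j0 j) * Y j) = X j0 * Y j0"
proof -
  have "(\<Sum>j<n. X j * cs (kdelta j0 j) * Y j) = (\<Sum>j<n. if j0 = j then X j * Y j else 0)"
    by (intro sum.cong) (auto simp: kdelta_def)
  then show ?thesis using assms by simp
qed

lemma state_pres:
  assumes j0: "j0 < NG"
  shows "cg RR (\<Sum>l<NF. cs (qstate F l) * P l j0) (cs (qstate G j0))"
proof -
  have "(\<Sum>l<NF. cs (qstate F l) * P l j0) = (\<Sum>l<NF. st (cs (qunit F l)) * P l j0)"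
    using F by (simp add: qstate_unit st_cs)
  also have "cg RR \<dots> (\<Sum>l<NF. st (\<Sum>j<NG. cs (qunit G j) * P l j) * P l j0)"
    by (intro cg_sum cg_mul_right cg_st cg_sym[OF relU_cg]) simp
  also have "(\<Sum>l<NF. st (\<Sum>j<NG. cs (qunit G j) * P l j) * P l j0)
      = (\<Sum>l<NF. \<Sum>j<NG. cs (cnj (qunit G j)) * (Ps l j * P l j0))"
    by (simp add: st_lin sum_distrib_right mult.assoc)
  also have "\<dots> = (\<Sum>j<NG. cs (cnj (qunit G j)) * (\<Sum>l<NF. Ps l j * P l j0))"
    by (subst sum.swap) (simp add: sum_distrib_left)
  also have "cg RR \<dots> (\<Sum>j<NG. cs (cnj (qunit G j)) * cs (kdelta j j0))"
    by (intro cg_sum cg_mul_left relU2_cg) (use j0 in auto)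
  also have "\<dots> = cs (qstate G j0)"
    using j0 G by (simp add: kd_sum qstate_unit)
  finally show ?thesis .
qed

lemma orth:
  "cg RR (\<Sum>b<NG. (\<Sum>i<NF. X i * P i b) * (\<Sum>j<NF. Ps j b * Y j)) (\<Sum>i<NF. X i * Y i)"
proof -
  have "(\<Sum>b<NG. (\<Sum>i<NF. X i * P i b) * (\<Sum>j<NF. Ps j b * Y j))
      = (\<Sum>b<NG. \<Sum>i<NF. \<Sum>j<NF. X i * (P i b * Ps j b) * Y j)"
    by (simp add: sum_product mult.assoc)
  also have "\<dots> = (\<Sum>i<NF. \<Sum>j<NF. X i * (\<Sum>b<NG. P i b * Ps j b) * Y j)"
    by (subst sum.swap, rule sum.cong[OF refl], subst sum.swap)
       (simp add: sum_distrib_left sum_distrib_right)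
  also have "cg RR \<dots> (\<Sum>i<NF. \<Sum>j<NF. X i * cs (kdelta i j) * Y j)"
    by (intro cg_sum cg_mul_right cg_mul_left relU1_cg) auto
  also have "\<dots> = (\<Sum>i<NF. X i * Y i)" by (simp add: kd_sum')
  finally show ?thesis .
qed


lemma delta_sum_aux: assumes "k < (n::nat)" shows "(\<Sum>k'<n. cs (d * (if k' = k then 1 else 0)) * X k') = cs d * X k"
proof -
  have "(\<Sum>k'<n. cs (d * (if k' = k then 1 else 0)) * X k') = (\<Sum>k'<n. if k' = k then cs d * X k' else 0)"
    by (intro sum.cong) auto
  also have "\<dots> = cs d * X k" using assms by (subst sum.delta) auto
  finally show ?thesis .
qed

lemma sum4_swap: "(\<Sum>a\<in>A. \<Sum>b\<in>B. \<Sum>k\<in>C. \<Sum>k'\<in>D. f a b k k') = (\<Sum>k\<in>C. \<Sum>k'\<in>D. \<Sum>a\<in>A. \<Sum>b\<in>B. f a b k k')"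
proof -
  have "(\<Sum>a\<in>A. \<Sum>b\<in>B. \<Sum>k\<in>C. \<Sum>k'\<in>D. f a b k k') = (\<Sum>a\<in>A. \<Sum>k\<in>C. \<Sum>k'\<in>D. \<Sum>b\<in>B. f a b k k')"
    by (rule sum.cong[OF refl], subst sum.swap, rule sum.cong[OF refl], rule sum.swap)
  also have "\<dots> = (\<Sum>k\<in>C. \<Sum>a\<in>A. \<Sum>k'\<in>D. \<Sum>b\<in>B. f a b k k')" by (rule sum.swap)
  also have "\<dots> = (\<Sum>k\<in>C. \<Sum>k'\<in>D. \<Sum>a\<in>A. \<Sum>b\<in>B. f a b k k')" by (rule sum.cong[OF refl], rule sum.swap)
  finally show ?thesis .
qed

lemma delta_cg:
  "cg RR (cs (complex_of_real ((qdelta G)\<^sup>2))) (cs (complex_of_real ((qdelta F)\<^sup>2)))"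
proof -
  have F0: "0 < NF" using F by (rule qdim_pos)
  define cG where "cG = qmul G" 
  define cF where "cF = qmul F"
  define A where "A i' a = (\<Sum>i<NF. cs (cF i i' 0) * P i a)" for i' a
  define L where "L a b = (\<Sum>k<NG. cs (cG a b k) * P 0 k)" for a b
  have LR: "cg RR (L a b) (\<Sum>i'<NF. A i' a * P i' b)" if "a < NG" "b < NG" for a b
  proof -
    have "cg RR (L a b) (\<Sum>(i,i')\<in>{..<NF}\<times>{..<NF}. cs (cF i i' 0) * (P i a * P i' b))"
      unfolding L_def cG_def cF_def using that F0 by (intro relM_cg)
    also have "(\<Sum>(i,i')\<in>{..<NF}\<times>{..<NF}. cs (cF i i' 0) * (P i a * P i' b))
        = (\<Sum>i'<NF. A i' a * P i' b)"
      unfolding A_def sum.cartesian_product[symmetric]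
      by (subst sum.swap) (simp add: sum_distrib_right mult.assoc)
    finally show ?thesis .
  qed
  have stR: "st (\<Sum>i'<NF. A i' a * P i' b) = (\<Sum>j'<NF. Ps j' b * st (A j' a))" for a b
    by (simp add: st_sum st_mul)
  define S1 where "S1 = (\<Sum>a<NG. \<Sum>b<NG. L a b * st (L a b))"
  have "cg RR S1 (\<Sum>a<NG. \<Sum>b<NG. (\<Sum>i'<NF. A i' a * P i' b) * (\<Sum>j'<NF. Ps j' b * st (A j' a)))"
    unfolding S1_def stR[symmetric] by (intro cg_sum cg_mul cg_st LR) auto
  also have "cg RR \<dots> (\<Sum>a<NG. \<Sum>i'<NF. A i' a * st (A i' a))"
    by (intro cg_sum orth)
  also have "(\<Sum>a<NG. \<Sum>i'<NF. A i' a * st (A i' a))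
      = (\<Sum>i'<NF. \<Sum>a<NG. (\<Sum>i<NF. cs (cF i i' 0) * P i a) * (\<Sum>j<NF. Ps j a * cs (cnj (cF j i' 0))))"
    by (subst sum.swap) (simp add: A_def st_sum st_mul st_cs)
  also have "cg RR \<dots> (\<Sum>i'<NF. \<Sum>i<NF. cs (cF i i' 0) * cs (cnj (cF i i' 0)))"
    by (intro cg_sum orth)
  also have "(\<Sum>i'<NF. \<Sum>i<NF. cs (cF i i' 0) * cs (cnj (cF i i' 0)))
     = cs (\<Sum>i<NF. \<Sum>i'<NF. cF i i' 0 * cnj (cF i i' 0))"
    by (subst sum.swap) (simp add: cs_sum cs_mul)
  also have "\<dots> = cs (complex_of_real ((qdelta F)\<^sup>2))"
    using delta_form[OF F F0 F0] by (simp add: cF_def)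
  finally have S1F: "cg RR S1 (cs (complex_of_real ((qdelta F)\<^sup>2)))" .
  have "S1 = (\<Sum>a<NG. \<Sum>b<NG. \<Sum>k<NG. \<Sum>k'<NG. cs (cG a b k * cnj (cG a b k')) * (P 0 k * Ps 0 k'))"
    by (simp add: S1_def L_def st_lin prod_lin)
  also have "\<dots> = (\<Sum>k<NG. \<Sum>k'<NG. \<Sum>a<NG. \<Sum>b<NG. cs (cG a b k * cnj (cG a b k')) * (P 0 k * Ps 0 k'))"
    by (rule sum4_swap)
  also have "\<dots> = (\<Sum>k<NG. \<Sum>k'<NG. cs (\<Sum>a<NG. \<Sum>b<NG. cG a b k * cnj (cG a b k')) * (P 0 k * Ps 0 k'))"
    by (simp add: cs_sum sum_distrib_right)
  also have "\<dots> = (\<Sum>k<NG. \<Sum>k'<NG. cs (complex_of_real ((qdelta G)\<^sup>2) * (if k' = k then 1 else 0)) * (P 0 k * Ps 0 k'))"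
    using delta_form[OF G] by (simp add: cG_def)
  also have "\<dots> = cs (complex_of_real ((qdelta G)\<^sup>2)) * (\<Sum>k<NG. P 0 k * Ps 0 k)"
    by (simp add: sum_distrib_left delta_sum_aux)
  also have "cg RR \<dots> (cs (complex_of_real ((qdelta G)\<^sup>2)) * cs (kdelta 0 0))"
    by (intro cg_mul_left relU1_cg F0)
  also have "\<dots> = cs (complex_of_real ((qdelta G)\<^sup>2))" by (simp add: kdelta_def)
  finally have "cg RR S1 (cs (complex_of_real ((qdelta G)\<^sup>2)))" .
  then show ?thesis using S1F by (meson cg_sym cg_trans)
qed

lemma delta_eq: assumes "quantum_iso G F" shows "qdelta G = qdelta F"
proof (rule ccontr)
  assume ne: "qdelta G \<noteq> qdelta F"
  have "(qdelta G)\<^sup>2 \<noteq> (qdelta F)\<^sup>2"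
    using ne delta_pos[OF G] delta_pos[OF F] by (simp add: power2_eq_iff_nonneg)
  then have "complex_of_real ((qdelta G)\<^sup>2) \<noteq> complex_of_real ((qdelta F)\<^sup>2)" by (simp only: of_real_eq_iff) simp
  then have z: "complex_of_real ((qdelta G)\<^sup>2) - complex_of_real ((qdelta F)\<^sup>2) \<noteq> 0" using right_minus_eq by blast
  have "cs (complex_of_real ((qdelta G)\<^sup>2) - complex_of_real ((qdelta F)\<^sup>2)) \<in> J RR"
    using delta_cg by (simp add: cg_def cs_diff)
  then have "cs (1 / (complex_of_real ((qdelta G)\<^sup>2) - complex_of_real ((qdelta F)\<^sup>2))) *
      cs (complex_of_real ((qdelta G)\<^sup>2) - complex_of_real ((qdelta F)\<^sup>2)) \<in> J RR"
    by (rule J_mul_left)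
  then have "1 \<in> J RR" using z by (simp add: cs_mul[symmetric])
  then show False using assms by (simp add: J_one quantum_iso_def)
qed

end

definition idx :: "nat \<Rightarrow> nat \<Rightarrow> nat \<Rightarrow> nat" where "idx N s j = Suc ((s - 1) * N + j)"

lemma idx_nz[simp]: "idx N s j \<noteq> 0" "0 \<noteq> idx N s j" "1 \<le> idx N s j" "Suc 0 \<le> idx N s j" "0 < idx N s j" by (auto simp: idx_def)

lemma slot_idx[simp]: "1 \<le> s \<Longrightarrow> j < N \<Longrightarrow> myc_slot N (idx N s j) = s"
  by (simp add: idx_def myc_slot_def)
lemma pos_idx[simp]: "j < N \<Longrightarrow> myc_pos N (idx N s j) = j"
  by (simp add: idx_def myc_pos_def)

lemma idx_inj: "1 \<le> s \<Longrightarrow> 1 \<le> s' \<Longrightarrow> j < N \<Longrightarrow> j' < N \<Longrightarrow> idx N s j = idx N s' j' \<longleftrightarrow> s = s' \<and> j = j'"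
  by (metis slot_idx pos_idx)

lemma idx_bound: "s \<le> r \<Longrightarrow> 1 \<le> s \<Longrightarrow> j < N \<Longrightarrow> idx N s j < 1 + r * N"
proof -
  assume a: "s \<le> r" "1 \<le> s" "j < N"
  have "(s - 1) * N + j < (s - 1) * N + N" using a by simp
  also have "\<dots> = s * N" using a by (cases s) auto
  also have "\<dots> \<le> r * N" using a by simp
  finally show ?thesis by (simp add: idx_def)
qed

lemma idx_decomp:
  assumes "t < 1 + r * N" "t \<noteq> 0" "0 < N"
  shows "\<exists>s j. s \<in> {1..r} \<and> j < N \<and> t = idx N s j"
proof -
  define s where "s = myc_slot N t" define j where "j = myc_pos N t"
  have "(t - 1) div N < r" using assms by (simp add: less_mult_imp_div_less)
  then have "s \<in> {1..r}" by (simp add: s_def myc_slot_def)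
  moreover have "j < N" using assms by (simp add: j_def myc_pos_def)
  moreover have "t = idx N s j" using assms
    by (simp add: idx_def s_def j_def myc_slot_def myc_pos_def)
  ultimately show ?thesis by blast
qed

lemma split_sum:
  assumes "0 < N"
  shows "(\<Sum>k<1 + r * N. h k) = h 0 + (\<Sum>s\<in>{1..r}. \<Sum>j<N. h (idx N s j))"
proof -
  have e: "{..<1 + r * N} = insert 0 ((\<lambda>(s,j). idx N s j) ` ({1..r} \<times> {..<N}))"
  proof
    show "{..<1 + r * N} \<subseteq> insert 0 ((\<lambda>(s,j). idx N s j) ` ({1..r} \<times> {..<N}))"
    proof
      fix t assume "t \<in> {..<1 + r * N}"
      then show "t \<in> insert 0 ((\<lambda>(s,j). idx N s j) ` ({1..r} \<times> {..<N}))"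
        using idx_decomp[of t r N] assms by (cases "t = 0") force+
    qed
  qed (auto intro: idx_bound[simplified])
  have inj: "inj_on (\<lambda>(s,j). idx N s j) ({1..r} \<times> {..<N})"
    by (auto simp: inj_on_def idx_inj)
  have "(\<Sum>k<1 + r * N. h k) = h 0 + (\<Sum>k\<in>(\<lambda>(s,j). idx N s j) ` ({1..r} \<times> {..<N}). h k)"
    unfolding e by (subst sum.insert) auto
  also have "(\<Sum>k\<in>(\<lambda>(s,j). idx N s j) ` ({1..r} \<times> {..<N}). h k) = (\<Sum>(s,j)\<in>{1..r} \<times> {..<N}. h (idx N s j))"
    by (subst sum.reindex[OF inj]) (simp add: split_def)
  also have "\<dots> = (\<Sum>s\<in>{1..r}. \<Sum>j<N. h (idx N s j))"
    by (simp add: sum.cartesian_product)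
  finally show ?thesis .
qed

definition img :: "nat \<Rightarrow> nat \<Rightarrow> nat \<Rightarrow> nat \<Rightarrow> bool \<Rightarrow> ncp" where
  "img M N t1 t2 b = (if t1 = 0 \<and> t2 = 0 then 1
     else if t1 \<noteq> 0 \<and> t2 \<noteq> 0 \<and> myc_slot M t1 = myc_slot N t2 then gn (myc_pos M t1, myc_pos N t2, b)
     else 0)"
definition imgg :: "nat \<Rightarrow> nat \<Rightarrow> gen \<Rightarrow> ncp" where
  "imgg M N g = (case g of (t1, t2, b) \<Rightarrow> img M N t1 t2 b)"

lemma imgg_flip: "imgg M N (gen_flip g) = st (imgg M N g)"
  by (cases g) (auto simp: imgg_def img_def gen_flip_def st_gn)

lemma img_00[simp]: "img M N 0 0 b = 1" by (simp add: img_def)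
lemma img_0i[simp]: "img M N 0 (idx N s j) b = 0" by (simp add: img_def)
lemma img_i0[simp]: "img M N (idx M s j) 0 b = 0" by (simp add: img_def)
lemma img_ii[simp]: "1 \<le> s \<Longrightarrow> 1 \<le> s' \<Longrightarrow> i < M \<Longrightarrow> j < N \<Longrightarrow>
  img M N (idx M s i) (idx N s' j) b = (if s = s' then gn (i, j, b) else 0)"
  by (simp add: img_def)

lemma phi_P: "phi (imgg M N) (P t u) = img M N t u False" by (simp add: P_def phi_gn imgg_def)
lemma phi_Ps: "phi (imgg M N) (Ps t u) = img M N t u True" by (simp add: Ps_def phi_gn imgg_def)

lemma sum_delta_r: "s \<in> {1..(r::nat)} \<Longrightarrow> (\<Sum>s'\<in>{1..r}. if s = s' then f s' else 0) = (f s :: ncp)"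
  by (subst sum.delta') auto

context
  fixes M N r :: nat
  assumes M: "0 < M" and N: "0 < N"
begin

lemma R0: "(\<Sum>k<1+r*N. X k * img M N 0 k b * Y k) = X 0 * Y 0"
  unfolding split_sum[OF N] by simp

lemma C0: "(\<Sum>i<1+r*M. X i * img M N i 0 b * Y i) = X 0 * Y 0"
  unfolding split_sum[OF M] by simp

lemma R1: assumes s: "s \<in> {1..r}" and l: "l < M"
  shows "(\<Sum>k<1+r*N. X k * img M N (idx M s l) k b * Y k) = (\<Sum>k<N. X (idx N s k) * gn (l, k, b) * Y (idx N s k))"
proof -
  have "(\<Sum>k<1+r*N. X k * img M N (idx M s l) k b * Y k)
      = (\<Sum>s'\<in>{1..r}. if s = s' then (\<Sum>k<N. X (idx N s' k) * gn (l, k, b) * Y (idx N s' k)) else 0)"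
    unfolding split_sum[OF N] img_i0 mult_zero_right mult_zero_left add_0
  proof (intro sum.cong refl)
    fix s' assume s': "s' \<in> {1..r}"
    show "(\<Sum>k<N. X (idx N s' k) * img M N (idx M s l) (idx N s' k) b * Y (idx N s' k)) =
      (if s = s' then \<Sum>k<N. X (idx N s' k) * gn (l, k, b) * Y (idx N s' k) else 0)"
      using s s' l by (cases "s = s'") auto
  qed
  also have "\<dots> = (\<Sum>k<N. X (idx N s k) * gn (l, k, b) * Y (idx N s k))" using s by (rule sum_delta_r)
  finally show ?thesis .
qed

lemma C1: assumes s: "s \<in> {1..r}" and j: "j < N"
  shows "(\<Sum>i<1+r*M. X i * img M N i (idx N s j) b * Y i) = (\<Sum>i<M. X (idx M s i) * gn (i, j, b) * Y (idx M s i))"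
proof -
  have "(\<Sum>i<1+r*M. X i * img M N i (idx N s j) b * Y i)
      = (\<Sum>s'\<in>{1..r}. if s = s' then (\<Sum>i<M. X (idx M s' i) * gn (i, j, b) * Y (idx M s' i)) else 0)"
    unfolding split_sum[OF M] img_0i mult_zero_right mult_zero_left add_0
  proof (intro sum.cong refl)
    fix s' assume s': "s' \<in> {1..r}"
    show "(\<Sum>i<M. X (idx M s' i) * img M N (idx M s' i) (idx N s j) b * Y (idx M s' i)) =
      (if s = s' then \<Sum>i<M. X (idx M s' i) * gn (i, j, b) * Y (idx M s' i) else 0)"
      using s s' j by (cases "s = s'") auto
  qed
  also have "\<dots> = (\<Sum>i<M. X (idx M s i) * gn (i, j, b) * Y (idx M s i))" using s by (rule sum_delta_r)
  finally show ?thesis .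
qed

lemma R0x: "(\<Sum>k<1+r*N. X k * img M N 0 k b) = X 0" using R0[of X b "\<lambda>_. 1"] by simp
lemma R0y: "(\<Sum>k<1+r*N. img M N 0 k b * Y k) = Y 0" using R0[of "\<lambda>_. 1" b Y] by simp
lemma C0x: "(\<Sum>i<1+r*M. X i * img M N i 0 b) = X 0" using C0[of X b "\<lambda>_. 1"] by simp
lemma C0y: "(\<Sum>i<1+r*M. img M N i 0 b * Y i) = Y 0" using C0[of "\<lambda>_. 1" b Y] by simp
lemma R1x: "s \<in> {1..r} \<Longrightarrow> l < M \<Longrightarrow> (\<Sum>k<1+r*N. X k * img M N (idx M s l) k b) = (\<Sum>k<N. X (idx N s k) * gn (l, k, b))"
  using R1[of s l X b "\<lambda>_. 1"] by simp
lemma R1y: "s \<in> {1..r} \<Longrightarrow> l < M \<Longrightarrow> (\<Sum>k<1+r*N. img M N (idx M s l) k b * Y k) = (\<Sum>k<N. gn (l, k, b) * Y (idx N s k))"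
  using R1[of s l "\<lambda>_. 1" b Y] by simp
lemma C1x: "s \<in> {1..r} \<Longrightarrow> j < N \<Longrightarrow> (\<Sum>i<1+r*M. X i * img M N i (idx N s j) b) = (\<Sum>i<M. X (idx M s i) * gn (i, j, b))"
  using C1[of s j X b "\<lambda>_. 1"] by simp
lemma C1y: "s \<in> {1..r} \<Longrightarrow> j < N \<Longrightarrow> (\<Sum>i<1+r*M. img M N i (idx N s j) b * Y i) = (\<Sum>i<M. gn (i, j, b) * Y (idx M s i))"
  using C1[of s j "\<lambda>_. 1" b Y] by simp

end

lemma myc_eval: "2 \<le> r \<Longrightarrow> mycielskian r H =
    \<lparr> qdim = 1 + r * qdim H,
       qmul = (\<lambda>t1 t2 t3.
          if t1 = 0 \<and> t2 = 0 \<and> t3 = 0 then complex_of_real (sqrt (1 + real r * (qdelta H)\<^sup>2))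
          else if 1 \<le> t1 \<and> 1 \<le> t2 \<and> 1 \<le> t3 \<and> myc_slot (qdim H) t1 = myc_slot (qdim H) t2 \<and> myc_slot (qdim H) t2 = myc_slot (qdim H) t3
            then complex_of_real (sqrt (1 + real r * (qdelta H)\<^sup>2) / qdelta H) * qmul H (myc_pos (qdim H) t1) (myc_pos (qdim H) t2) (myc_pos (qdim H) t3)
          else 0),
       qstar = (\<lambda>t1 t2.
          if t1 = 0 \<and> t2 = 0 then 1
          else if 1 \<le> t1 \<and> 1 \<le> t2 \<and> myc_slot (qdim H) t1 = myc_slot (qdim H) t2 then qstar H (myc_pos (qdim H) t1) (myc_pos (qdim H) t2)
          else 0),
       qunit = (\<lambda>t. if t = 0 then complex_of_real (1 / sqrt (1 + real r * (qdelta H)\<^sup>2))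
                    else complex_of_real (qdelta H / sqrt (1 + real r * (qdelta H)\<^sup>2)) * qunit H (myc_pos (qdim H) t)),
       qstate = (\<lambda>t. if t = 0 then complex_of_real (1 / sqrt (1 + real r * (qdelta H)\<^sup>2))
                    else complex_of_real (qdelta H / sqrt (1 + real r * (qdelta H)\<^sup>2)) * qstate H (myc_pos (qdim H) t)),
       qdelta = sqrt (1 + real r * (qdelta H)\<^sup>2),
       qadj = (\<lambda>t1 t2.
          if t1 = 0 \<and> t2 = 0 then 0
          else if t1 = 0 then (if myc_slot (qdim H) t2 = r then complex_of_real (qdelta H) * qstate H (myc_pos (qdim H) t2) else 0)
          else if t2 = 0 then (if myc_slot (qdim H) t1 = r then complex_of_real (qdelta H) * qunit H (myc_pos (qdim H) t1) else 0)
          else if myc_feeds r (myc_slot (qdim H) t2) (myc_slot (qdim H) t1) then qadj H (myc_pos (qdim H) t1) (myc_pos (qdim H) t2)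
          else 0) \<rparr>"
  by (simp add: mycielskian_def Let_def)

lemmas RC = R0x R0y C0x C0y R1x R1y C1x C1y


lemma prod_restructure: "(\<Sum>(i,i')\<in>A\<times>B. cs (f i i') * (X i * Y i')) = (\<Sum>i'\<in>B. (\<Sum>i\<in>A. cs (f i i') * X i) * Y i')"
proof -
  have "(\<Sum>(i,i')\<in>A\<times>B. cs (f i i') * (X i * Y i')) = (\<Sum>i\<in>A. \<Sum>i'\<in>B. cs (f i i') * (X i * Y i'))"
    by (rule sum.cartesian_product[symmetric])
  also have "\<dots> = (\<Sum>i'\<in>B. \<Sum>i\<in>A. cs (f i i') * (X i * Y i'))" by (rule sum.swap)
  also have "\<dots> = (\<Sum>i'\<in>B. (\<Sum>i\<in>A. cs (f i i') * X i) * Y i')"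
    by (simp add: sum_distrib_right mult.assoc)
  finally show ?thesis .
qed

lemma relM_alt: "relM G F a b l = (\<Sum>k<qdim G. cs (qmul G a b k) * P l k) -
  (\<Sum>i'<qdim F. (\<Sum>i<qdim F. cs (qmul F i i' l) * P i a) * P i' b)"
  unfolding relM_def prod_restructure ..

lemma relM_cg': "a < qdim G \<Longrightarrow> b < qdim G \<Longrightarrow> l < qdim F \<Longrightarrow>
  cg (JJ G F) (\<Sum>k<qdim G. cs (qmul G a b k) * P l k)
   (\<Sum>i'<qdim F. (\<Sum>i<qdim F. cs (qmul F i i' l) * P i a) * P i' b)"
  using relM_cg[of a G b l F] unfolding prod_restructure .

lemma gnP: "gn (i, j, False) = P i j" "gn (i, j, True) = Ps i j" by (simp_all add: P_def Ps_def)

context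
  fixes r :: nat and G F :: qgraph
  assumes G: "is_qgraph G" and F: "is_qgraph F" and iso: "quantum_iso G F" and r2: "2 \<le> r"
begin

lemma dFG: "qdelta F = qdelta G" using delta_eq[OF G F iso] by simp
lemma N0: "0 < qdim G" using G by (rule qdim_pos)
lemma M0: "0 < qdim F" using F by (rule qdim_pos)

lemmas RCs = RC[OF M0 N0]
lemmas mycs = myc_eval[OF r2] dFG

lemma decomp: assumes "t < 1 + r * K" "0 < K" obtains "t = 0" | s j where "s \<in> {1..r}" "j < K" "t = idx K s j"
  using idx_decomp[OF assms(1) _ assms(2)] by (cases "t = 0") auto

lemma famU: assumes l: "l < 1 + r * qdim F"
  shows "phi (imgg (qdim F) (qdim G)) (relU (mycielskian r G) (mycielskian r F) l) \<in> J (JJ G F)"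
proof -
  have e: "phi (imgg (qdim F) (qdim G)) (relU (mycielskian r G) (mycielskian r F) l) = (\<Sum>j<1 + r * qdim G. cs (qunit (mycielskian r G) j) * img (qdim F) (qdim G) l j False) - cs (qunit (mycielskian r F) l)"
    by (simp only: relU_def phi_diff phi_sum phi_cs_mul phi_P phi_cs mycs qgraph.select_convs)
  show ?thesis
  proof (cases rule: decomp[OF l M0])
    case 1 then show ?thesis unfolding e unfolding 1 by (simp only: RCs) (simp add: mycs)
  next
    case (2 s l0)
    have "cg (JJ G F) (\<Sum>j<1 + r * qdim G. cs (qunit (mycielskian r G) j) * img (qdim F) (qdim G) (idx (qdim F) s l0) j False) (cs (qunit (mycielskian r F) (idx (qdim F) s l0)))"
    proof -
      have "(\<Sum>j<1 + r * qdim G. cs (qunit (mycielskian r G) j) * img (qdim F) (qdim G) (idx (qdim F) s l0) j False)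
          = cs (complex_of_real (qdelta G / sqrt (1 + real r * (qdelta G)\<^sup>2))) * (\<Sum>j<qdim G. cs (qunit G j) * P l0 j)"
        using 2 by (simp only: RCs) (simp add: mycs gnP sum_distrib_left mult.assoc[symmetric] cs_mul[symmetric])
      also have "cg (JJ G F) \<dots> (cs (complex_of_real (qdelta G / sqrt (1 + real r * (qdelta G)\<^sup>2))) * cs (qunit F l0))"
        by (intro cg_mul_left relU_cg) (use 2 in simp)
      also have "\<dots> = cs (qunit (mycielskian r F) (idx (qdim F) s l0))" using 2 by (simp add: mycs cs_mul[symmetric])
      finally show ?thesis .
    qed
    then show ?thesis unfolding e unfolding 2(3) cg_def .
  qed
qed


lemma famS: assumes a: "a < 1 + r * qdim G" and l: "l < 1 + r * qdim F"
  shows "phi (imgg (qdim F) (qdim G)) (relS (mycielskian r G) (mycielskian r F) a l) \<in> J (JJ G F)"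
proof -
  have e: "phi (imgg (qdim F) (qdim G)) (relS (mycielskian r G) (mycielskian r F) a l)
     = (\<Sum>k<1 + r * qdim G. cs (qstar (mycielskian r G) a k) * img (qdim F) (qdim G) l k False)
     - (\<Sum>i<1 + r * qdim F. cs (qstar (mycielskian r F) i l) * img (qdim F) (qdim G) i a True)"
    by (simp only: relS_def phi_diff phi_sum phi_cs_mul phi_P phi_Ps mycs qgraph.select_convs)
  show ?thesis
  proof (cases rule: decomp[OF a N0])
    case 1 note a1 = this
    show ?thesis
    proof (cases rule: decomp[OF l M0])
      case 1 then show ?thesis unfolding e unfolding a1 1 by (simp only: RCs) (simp add: mycs)
    next
      case (2 s l0) then show ?thesis unfolding e unfolding a1 2(3) using 2 by (simp only: RCs) (simp add: mycs)
    qed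
  next
    case (2 s1 a0) note a1 = this
    show ?thesis
    proof (cases rule: decomp[OF l M0])
      case 1 then show ?thesis unfolding e unfolding a1(3) 1 using a1 by (simp only: RCs) (simp add: mycs)
    next
      case (2 s l0)
      show ?thesis
      proof (cases "s1 = s")
        case True
        have "cg (JJ G F) (\<Sum>k<qdim G. cs (qstar G a0 k) * P l0 k) (\<Sum>i<qdim F. cs (qstar F i l0) * Ps i a0)"
          by (rule relS_cg) (use a1 2 in auto)
        then show ?thesis unfolding e unfolding a1(3) 2(3) using a1 2 True
          by (simp only: RCs) (simp add: mycs gnP cg_def)
      next
        case False
        then show ?thesis unfolding e unfolding a1(3) 2(3) using a1 2
          by (simp only: RCs) (simp add: mycs)
      qed
    qed
  qed
qed

lemma famA: assumes j: "j < 1 + r * qdim G" and l: "l < 1 + r * qdim F"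
  shows "phi (imgg (qdim F) (qdim G)) (relA (mycielskian r G) (mycielskian r F) j l) \<in> J (JJ G F)"
proof -
  have e: "phi (imgg (qdim F) (qdim G)) (relA (mycielskian r G) (mycielskian r F) j l)
     = (\<Sum>k<1 + r * qdim G. cs (qadj (mycielskian r G) k j) * img (qdim F) (qdim G) l k False)
     - (\<Sum>i<1 + r * qdim F. cs (qadj (mycielskian r F) l i) * img (qdim F) (qdim G) i j False)"
    by (simp only: relA_def phi_diff phi_sum phi_cs_mul phi_P mycs qgraph.select_convs)
  show ?thesis
  proof (cases rule: decomp[OF j N0])
    case 1 note a1 = this
    show ?thesis
    proof (cases rule: decomp[OF l M0])
      case 1 then show ?thesis unfolding e unfolding a1 1 by (simp only: RCs) (simp add: mycs)
    next
      case (2 s l0)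
      show ?thesis
      proof (cases "s = r")
        case True
        have "cg (JJ G F) (cs (complex_of_real (qdelta G)) * (\<Sum>k<qdim G. cs (qunit G k) * P l0 k))
                 (cs (complex_of_real (qdelta G)) * cs (qunit F l0))"
          by (intro cg_mul_left relU_cg) (use 2 in auto)
        then show ?thesis unfolding e unfolding a1 2(3) using 2 True
          by (simp only: RCs) (simp add: mycs gnP cg_def sum_distrib_left mult.assoc[symmetric] cs_mul[symmetric])
      next
        case False
        then show ?thesis unfolding e unfolding a1 2(3) using 2
          by (simp only: RCs) (simp add: mycs)
      qed
    qed
  next
    case (2 s1 j0) note a1 = this
    show ?thesis
    proof (cases rule: decomp[OF l M0])
      case 1
      show ?thesis
      proof (cases "s1 = r")
        case True
        have "cg (JJ G F) (cs (complex_of_real (qdelta G)) * cs (qstate G j0))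
                 (cs (complex_of_real (qdelta G)) * (\<Sum>l<qdim F. cs (qstate F l) * P l j0))"
          by (intro cg_mul_left cg_sym[OF state_pres[OF G F]]) (use a1 in auto)
        then show ?thesis unfolding e unfolding a1(3) 1 using a1 True
          by (simp only: RCs) (simp add: mycs gnP cg_def sum_distrib_left mult.assoc[symmetric] cs_mul[symmetric])
      next
        case False
        then show ?thesis unfolding e unfolding a1(3) 1 using a1
          by (simp only: RCs) (simp add: mycs)
      qed
    next
      case (2 s l0)
      show ?thesis
      proof (cases "myc_feeds r s1 s")
        case True
        have "cg (JJ G F) (\<Sum>k<qdim G. cs (qadj G k j0) * P l0 k) (\<Sum>i<qdim F. cs (qadj F l0 i) * P i j0)"
          by (rule relA_cg) (use a1 2 in auto)
        then show ?thesis unfolding e unfolding a1(3) 2(3) using a1 2 True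
          by (simp only: RCs) (simp add: mycs gnP cg_def)
      next
        case False
        then show ?thesis unfolding e unfolding a1(3) 2(3) using a1 2
          by (simp only: RCs) (simp add: mycs)
      qed
    qed
  qed
qed


lemma famU1: assumes i: "i < 1 + r * qdim F" and k: "k < 1 + r * qdim F"
  shows "phi (imgg (qdim F) (qdim G)) (relU1 (mycielskian r G) (mycielskian r F) i k) \<in> J (JJ G F)"
proof -
  have e: "phi (imgg (qdim F) (qdim G)) (relU1 (mycielskian r G) (mycielskian r F) i k)
     = (\<Sum>j<1 + r * qdim G. img (qdim F) (qdim G) i j False * img (qdim F) (qdim G) k j True) - cs (kdelta i k)"
    by (simp only: relU1_def phi_diff phi_sum phi_mul phi_P phi_Ps phi_cs mycs qgraph.select_convs)
  show ?thesis
  proof (cases rule: decomp[OF i M0])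
    case 1 note a1 = this
    show ?thesis
    proof (cases rule: decomp[OF k M0])
      case 1 then show ?thesis unfolding e unfolding a1 1 by (simp only: RCs) (simp add: kdelta_def)
    next
      case (2 s l0) then show ?thesis unfolding e unfolding a1 2(3) using 2 by (simp only: RCs) (simp add: kdelta_def)
    qed
  next
    case (2 s1 i0) note a1 = this
    show ?thesis
    proof (cases rule: decomp[OF k M0])
      case 1 then show ?thesis unfolding e unfolding a1(3) 1 using a1 by (simp only: RCs) (simp add: kdelta_def)
    next
      case (2 s k0)
      show ?thesis
      proof (cases "s1 = s")
        case True
        have "cg (JJ G F) (\<Sum>j<qdim G. P i0 j * Ps k0 j) (cs (kdelta i0 k0))"
          by (rule relU1_cg) (use a1 2 in auto)
        then show ?thesis unfolding e unfolding a1(3) 2(3) using a1 2 True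
          by (simp only: RCs) (simp add: gnP cg_def kdelta_def idx_inj)
      next
        case False
        then show ?thesis unfolding e unfolding a1(3) 2(3) using a1 2
          by (simp only: RCs) (simp add: kdelta_def idx_inj)
      qed
    qed
  qed
qed

lemma famU2: assumes j: "j < 1 + r * qdim G" and k: "k < 1 + r * qdim G"
  shows "phi (imgg (qdim F) (qdim G)) (relU2 (mycielskian r G) (mycielskian r F) j k) \<in> J (JJ G F)"
proof -
  have e: "phi (imgg (qdim F) (qdim G)) (relU2 (mycielskian r G) (mycielskian r F) j k)
     = (\<Sum>i<1 + r * qdim F. img (qdim F) (qdim G) i j True * img (qdim F) (qdim G) i k False) - cs (kdelta j k)"
    by (simp only: relU2_def phi_diff phi_sum phi_mul phi_P phi_Ps phi_cs mycs qgraph.select_convs)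
  show ?thesis
  proof (cases rule: decomp[OF j N0])
    case 1 note a1 = this
    show ?thesis
    proof (cases rule: decomp[OF k N0])
      case 1 then show ?thesis unfolding e unfolding a1 1 by (simp only: RCs) (simp add: kdelta_def)
    next
      case (2 s l0) then show ?thesis unfolding e unfolding a1 2(3) using 2 by (simp only: RCs) (simp add: kdelta_def)
    qed
  next
    case (2 s1 j0) note a1 = this
    show ?thesis
    proof (cases rule: decomp[OF k N0])
      case 1 then show ?thesis unfolding e unfolding a1(3) 1 using a1 by (simp only: RCs) (simp add: kdelta_def)
    next
      case (2 s k0)
      show ?thesis
      proof (cases "s1 = s")
        case True
        have "cg (JJ G F) (\<Sum>i<qdim F. Ps i j0 * P i k0) (cs (kdelta j0 k0))"
          by (rule relU2_cg) (use a1 2 in auto)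
        then show ?thesis unfolding e unfolding a1(3) 2(3) using a1 2 True
          by (simp only: RCs) (simp add: gnP cg_def kdelta_def idx_inj)
      next
        case False
        then show ?thesis unfolding e unfolding a1(3) 2(3) using a1 2
          by (simp only: RCs) (simp add: kdelta_def idx_inj)
      qed
    qed
  qed
qed

lemma famM: assumes a: "a < 1 + r * qdim G" and b: "b < 1 + r * qdim G" and l: "l < 1 + r * qdim F"
  shows "phi (imgg (qdim F) (qdim G)) (relM (mycielskian r G) (mycielskian r F) a b l) \<in> J (JJ G F)"
proof -
  have e: "phi (imgg (qdim F) (qdim G)) (relM (mycielskian r G) (mycielskian r F) a b l)
     = (\<Sum>k<1 + r * qdim G. cs (qmul (mycielskian r G) a b k) * img (qdim F) (qdim G) l k False)
     - (\<Sum>i'<1 + r * qdim F. (\<Sum>i<1 + r * qdim F. cs (qmul (mycielskian r F) i i' l) * img (qdim F) (qdim G) i a False) * img (qdim F) (qdim G) i' b False)"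
    by (simp only: relM_alt phi_diff phi_sum phi_mul phi_cs phi_P mycs qgraph.select_convs)
  show ?thesis
  proof (cases rule: decomp[OF a N0])
    case 1 note a1 = this
    show ?thesis
    proof (cases rule: decomp[OF b N0])
      case 1 note b1 = this
      show ?thesis
      proof (cases rule: decomp[OF l M0])
        case 1 then show ?thesis unfolding e unfolding a1 b1 1 by (simp only: RCs) (simp add: mycs)
      next
        case (2 s l0) then show ?thesis unfolding e unfolding a1 b1 2(3) using 2 by (simp only: RCs) (simp add: mycs)
      qed
    next
      case (2 s2 b0) note b1 = this
      show ?thesis
      proof (cases rule: decomp[OF l M0])
        case 1 then show ?thesis unfolding e unfolding a1 b1(3) 1 using b1 by (simp only: RCs) (simp add: mycs)
      next
        case (2 s l0) then show ?thesis unfolding e unfolding a1 b1(3) 2(3) using b1 2 by (simp only: RCs) (simp add: mycs)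
      qed
    qed
  next
    case (2 s1 a0) note a1 = this
    show ?thesis
    proof (cases rule: decomp[OF b N0])
      case 1 note b1 = this
      show ?thesis
      proof (cases rule: decomp[OF l M0])
        case 1 then show ?thesis unfolding e unfolding a1(3) b1 1 using a1 by (simp only: RCs) (simp add: mycs)
      next
        case (2 s l0) then show ?thesis unfolding e unfolding a1(3) b1 2(3) using a1 2 by (simp only: RCs) (simp add: mycs)
      qed
    next
      case (2 s2 b0) note b1 = this
      show ?thesis
      proof (cases rule: decomp[OF l M0])
        case 1 then show ?thesis unfolding e unfolding a1(3) b1(3) 1 using a1 b1 by (simp only: RCs) (simp add: mycs)
      next
        case (2 s l0)
        show ?thesis
        proof (cases "s1 = s2 \<and> s2 = s")
          case True
          have "cg (JJ G F) (cs (complex_of_real (sqrt (1 + real r * (qdelta G)\<^sup>2) / qdelta G)) * (\<Sum>k<qdim G. cs (qmul G a0 b0 k) * P l0 k))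
             (cs (complex_of_real (sqrt (1 + real r * (qdelta G)\<^sup>2) / qdelta G)) * (\<Sum>i'<qdim F. (\<Sum>i<qdim F. cs (qmul F i i' l0) * P i a0) * P i' b0))"
            by (intro cg_mul_left relM_cg') (use a1 b1 2 in auto)
          then show ?thesis unfolding e unfolding a1(3) b1(3) 2(3) using a1 b1 2 True
            by (simp only: RCs) (simp add: mycs gnP cg_def sum_distrib_left mult.assoc[symmetric] cs_mul[symmetric])
        next
          case False
          then show ?thesis unfolding e unfolding a1(3) b1(3) 2(3) using a1 b1 2
            by (simp only: RCs) (auto simp: mycs)
        qed
      qed
    qed
  qed
qed

end

lemma Abs_rep_fa: "fa_finite x \<Longrightarrow> rep (Abs x) = x" by (simp add: Abs_inverse)

context
  fixes r :: nat and G F :: qgraph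
  assumes G: "is_qgraph G" and F: "is_qgraph F" and iso: "quantum_iso G F" and r2: "2 \<le> r"
begin

lemma rels_phi:
  assumes "x \<in> qiso_rels (mycielskian r G) (mycielskian r F)"
  shows "\<exists>X. x = rep X \<and> phi (imgg (qdim F) (qdim G)) X \<in> J (JJ G F)"
  using qiso_rels_cases[OF assms]
  using famM[OF G F iso r2] famU[OF G F iso r2] famS[OF G F iso r2] famA[OF G F iso r2]
    famU1[OF G F iso r2] famU2[OF G F iso r2]
  by (simp only: myc_eval[OF r2] qgraph.select_convs) blast

lemma ideal_phi:
  assumes "x \<in> star_ideal (qiso_rels (mycielskian r G) (mycielskian r F))"
  shows "fa_finite x \<and> phi (imgg (qdim F) (qdim G)) (Abs x) \<in> J (JJ G F)"
  using assms
proof (induction rule: star_ideal.induct)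
  case (rel x)
  then obtain X where "x = rep X" "phi (imgg (qdim F) (qdim G)) X \<in> J (JJ G F)" using rels_phi by blast
  then show ?case by (simp add: rep_finite rep_inverse)
next
  case (rel_star x)
  then obtain X where X: "x = rep X" "phi (imgg (qdim F) (qdim G)) X \<in> J (JJ G F)" using rels_phi by blast
  then have "fa_star x = rep (st X)" by (simp add: rep_st)
  moreover have "phi (imgg (qdim F) (qdim G)) (st X) \<in> J (JJ G F)"
    using X by (simp add: phi_st imgg_flip J_st)
  ultimately show ?case by (simp add: rep_finite rep_inverse)
next
  case zero
  have "Abs fa_zero = 0" by (metis rep_zero rep_inverse)
  then show ?case by (simp add: fa_finite_def fa_zero_def)
next
  case (add x y)
  then have "fa_add x y = rep (Abs x + Abs y)" by (simp add: rep_add Abs_rep_fa)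
  then show ?case using add by (simp add: rep_finite rep_inverse phi_add J_add)
next
  case (mult x a b)
  then have "fa_mul (fa_mul a x) b = rep (Abs a * Abs x * Abs b)" by (simp add: rep_mul Abs_rep_fa)
  then show ?case using mult by (simp add: rep_finite rep_inverse phi_mul J_mult)
qed

lemma main_r2: "quantum_iso (mycielskian r G) (mycielskian r F)"
proof -
  have "fa_one \<notin> star_ideal (qiso_rels (mycielskian r G) (mycielskian r F))"
  proof
    assume "fa_one \<in> star_ideal (qiso_rels (mycielskian r G) (mycielskian r F))"
    then have "phi (imgg (qdim F) (qdim G)) (Abs fa_one) \<in> J (JJ G F)" using ideal_phi by blast
    moreover have "Abs fa_one = 1" by (metis rep_one rep_inverse)
    ultimately have "1 \<in> J (JJ G F)" by (simp add: phi_one)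
    then show False using iso by (simp add: J_one quantum_iso_def)
  qed
  then show ?thesis by (simp add: quantum_iso_def)
qed

end

theorem mainTheorem2:
  fixes G F :: qgraph and r :: nat
  assumes "is_qgraph G" and "is_qgraph F" and "quantum_iso G F" and "1 \<le> r"
  shows "quantum_iso (mycielskian r G) (mycielskian r F)"
proof (cases "r = 1")
  case True
  then show ?thesis using assms by (simp add: mycielskian_def)
next
  case False
  then have "2 \<le> r" using assms by simp
  then show ?thesis using main_r2 assms by blast
qed

end
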